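(* Each of the following real polynomial systems has an isochronous center at the origin $O$, with the indicated Urabe function $h$: (i) $\dot x=-y+xy-\frac12x^{2}y+\frac18x^{3}y$, $\dot y=x-\frac34x^{2}+\frac14y^{2}+\frac{5}{24}x^{3}+\frac38xy^{2}-\frac1{16}x^{2}y^{2}-\frac1{48}x^{4}$, with $h(\xi)=\dfrac{3\xi}{\sqrt{16+9\xi^{2}}}$; (ii) $\dot x=-y+xy+9x^{2}y+6x^{3}y$, $\dot y=x+\frac32x^{2}-\frac12y^{2}+x^{3}+12xy^{2}+12x^{2}y^{2}+\frac12x^{4}$, with $h(\xi)=-\dfrac{\xi}{\sqrt{4+49\xi^{2}}}$; (iii) for every $a_{3,1}\in\mathbb R$: $\dot x=-y+xy-\left(3a_{3,1}+\frac29\right)x^{2}y+a_{3,1}x^{3}y$, $\dot y=x+\left(\frac19-3a_{3,1}\right)xy^{2}$, with $h(\xi)=\dfrac{\xi}{\sqrt{(1-27a_{3,1})\xi^{2}+9}}$; (iv) $\dot x=-y+xy$, $\dot y=x-\frac32x^{2}+y^{2}+x^{3}-\frac14x^{4}$, with $h(\xi)=\dfrac{\xi}{\sqrt{1+\xi^{2}}}$.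
   Context: For a real planar polynomial system $\dot x=-y+A(x,y)$, $\dot y=x+B(x,y)$, with $A,B$ polynomials having no terms of degree $<2$, the origin $O$ is a center if there is a punctured neighborhood of $O$ in which every orbit is a closed orbit surrounding $O$; it is an isochronous center if moreover all these closed orbits have the same period. Urabe function: consider a system $\dot x=p_0(x)+p_1(x)y$, $\dot y=q_0(x)+q_1(x)y+q_2(x)y^2$ with $p_i,q_i$ real polynomials, $p_0(0)=q_0(0)=0$, $p_1(0)\neq0$, and such that $-\frac{p_1'p_0}{p_1}+q_1+p_0'-\frac{2q_2p_0}{p_1}\equiv0$ (this holds automatically when $p_0\equiv q_1\equiv0$). Put $f=-\frac{q_2+p_1'}{p_1}$, $g=-\frac{q_2p_0^2}{p_1}+q_1p_0-p_1q_0$; the change of variables $z=p_0(x)+p_1(x)y$ transforms the system into $\dot x=z$, $\dot z=-g(x)-f(x)z^2$. Let $F(x)=\int_0^xf(s)\,ds$ and let $\xi$ be defined near $0$ by $\frac12\xi(x)^2=\int_0^xg(s)e^{2F(s)}ds$ with $x\xi(x)>0$ for $x\ne0$. When $O$ is an isochronous center, its Urabe function is the odd real-analytic function $h$ defined near $0$ satisfying $\dfrac{\xi(x)}{1+h(\xi(x))}=g(x)e^{F(x)}$ for $x$ near $0$. Here all systems have $p_0\equiv q_1\equiv0$. *)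

theory Defs
  imports "HOL-Analysis.Analysis" "HOL-Computational_Algebra.Polynomial"
begin

type_synonym vfield = "real \<times> real \<Rightarrow> real \<times> real"

definition closed_orbit_through :: "vfield \<Rightarrow> (real \<Rightarrow> real \<times> real) \<Rightarrow> real \<times> real \<Rightarrow> real \<Rightarrow> bool" where
  "closed_orbit_through V phi p T \<longleftrightarrow>
     T > 0 \<and> phi 0 = p \<and>
     (\<forall>t. (phi has_vector_derivative V (phi t)) (at t)) \<and>
     (\<forall>t. phi (t + T) = phi t) \<and>
     (\<forall>s. 0 < s \<and> s < T \<longrightarrow> phi s \<noteq> p) \<and>
     (0, 0) \<in> inside (range phi)"

definition is_center :: "vfield \<Rightarrow> bool" where
  "is_center V \<longleftrightarrow> (\<exists>U. open U \<and> (0, 0) \<in> U \<and>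
     (\<forall>p \<in> U - {(0, 0)}. \<exists>phi T. closed_orbit_through V phi p T))"

definition is_isochronous_center :: "vfield \<Rightarrow> bool" where
  "is_isochronous_center V \<longleftrightarrow> is_center V \<and> (\<exists>U T. open U \<and> (0, 0) \<in> U \<and>
     (\<forall>p \<in> U - {(0, 0)}. \<exists>phi. closed_orbit_through V phi p T))"

definition oint :: "real \<Rightarrow> real \<Rightarrow> (real \<Rightarrow> real) \<Rightarrow> real" where
  "oint a b f = (if a \<le> b then integral {a..b} f else - integral {b..a} f)"

definition odd_analytic_near_0 :: "(real \<Rightarrow> real) \<Rightarrow> bool" where
  "odd_analytic_near_0 h \<longleftrightarrow> (\<exists>r > 0. \<exists>c :: nat \<Rightarrow> real.
     \<forall>s. \<bar>s\<bar> < r \<longrightarrow> h (- s) = - h s \<and> (\<lambda>n. c n * s ^ n) sums h s)"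

definition urabe_function :: "vfield \<Rightarrow> (real \<Rightarrow> real) \<Rightarrow> bool" where
  "urabe_function V h \<longleftrightarrow> is_isochronous_center V \<and> odd_analytic_near_0 h \<and>
    (\<exists>p0 p1 q0 q1 q2 :: real poly.
      (\<forall>x y. V (x, y) = (poly p0 x + poly p1 x * y,
                          poly q0 x + poly q1 x * y + poly q2 x * y ^ 2)) \<and>
      poly p0 0 = 0 \<and> poly q0 0 = 0 \<and> poly p1 0 \<noteq> 0 \<and>
      (\<forall>x. poly p1 x \<noteq> 0 \<longrightarrow>
         - poly (pderiv p1) x * poly p0 x / poly p1 x + poly q1 x + poly (pderiv p0) x
         - 2 * poly q2 x * poly p0 x / poly p1 x = 0) \<and>
      (let f = (\<lambda>x. - (poly q2 x + poly (pderiv p1) x) / poly p1 x);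
           g = (\<lambda>x. - poly q2 x * (poly p0 x)\<^sup>2 / poly p1 x + poly q1 x * poly p0 x
                    - poly p1 x * poly q0 x);
           F = (\<lambda>x. oint 0 x f)
       in \<exists>\<delta> > 0. \<exists>\<xi> :: real \<Rightarrow> real. \<forall>x. \<bar>x\<bar> < \<delta> \<longrightarrow>
            (\<xi> x)\<^sup>2 / 2 = oint 0 x (\<lambda>s. g s * exp (2 * F s)) \<and>
            (x \<noteq> 0 \<longrightarrow> x * \<xi> x > 0) \<and>
            \<xi> x / (1 + h (\<xi> x)) = g x * exp (F x)))"

end

theory Submission
  imports Defs "HOL-Analysis.Interval_Integral"
begin

lemma oint_ftc:
  fixes G k :: "real \<Rightarrow> real"
  assumes d: "\<delta> > 0"
    and der: "\<And>s. \<bar>s\<bar> < \<delta> \<Longrightarrow> (G has_real_derivative k s) (at s)"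
    and x: "\<bar>x\<bar> < \<delta>"
  shows "oint 0 x k = G x - G 0"
proof -
  have D: "(G has_vector_derivative k s) (at s within S)" if "\<bar>s\<bar> < \<delta>" for s S
    using der[OF that] has_real_derivative_iff_has_vector_derivative has_vector_derivative_at_within by blast
  show ?thesis
  proof (cases "0 \<le> x")
    case True
    have "(k has_integral (G x - G 0)) {0..x}"
      by (rule fundamental_theorem_of_calculus[OF True]) (use x in \<open>auto intro!: D\<close>)
    then show ?thesis using True by (simp add: oint_def integral_unique)
  next
    case False
    have "(k has_integral (G 0 - G x)) {x..0}"
      by (rule fundamental_theorem_of_calculus) (use x False in \<open>auto intro!: D\<close>)
    then show ?thesis using False by (simp add: oint_def integral_unique)
  qed
qed

lemma odd_in_range: "odd (n::nat) \<Longrightarrow> n \<in> range (\<lambda>n. 2*n+1)"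
  by (metis oddE rangeI)

lemma odd_analytic_h:
  fixes m c k :: real
  assumes k: "k > 0"
  shows "odd_analytic_near_0 (\<lambda>s. m * s / sqrt (c * s^2 + k))"
proof -
  define r where "r = sqrt (k / (\<bar>c\<bar> + 1))"
  have r: "r > 0" using k by (simp add: r_def)
  define C where "C j = (if odd j then (m / sqrt k) * ((-1/2) gchoose (j div 2)) * (c/k)^(j div 2) else 0)" for j :: nat
  show ?thesis unfolding odd_analytic_near_0_def
  proof (intro exI[of _ r] conjI r exI[of _ C] allI impI)
    fix s :: real assume s: "\<bar>s\<bar> < r"
    show "m * - s / sqrt (c * (- s)\<^sup>2 + k) = - (m * s / sqrt (c * s\<^sup>2 + k))" by simp
    define z where "z = c * s^2 / k"
    have s2: "s^2 < k / (\<bar>c\<bar> + 1)"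
    proof -
      have "s^2 = \<bar>s\<bar>^2" by simp
      also have "\<dots> < r^2" using s by (intro power_strict_mono) auto
      also have "\<dots> = k / (\<bar>c\<bar> + 1)" using k by (simp add: r_def)
      finally show ?thesis .
    qed
    have z: "\<bar>z\<bar> < 1"
    proof -
      have "\<bar>z\<bar> = \<bar>c\<bar> * s^2 / k" using k by (simp add: z_def abs_mult)
      also have "\<dots> \<le> \<bar>c\<bar> * (k / (\<bar>c\<bar> + 1)) / k"
        using s2 k by (intro divide_right_mono mult_left_mono) auto
      also have "\<dots> = \<bar>c\<bar> / (\<bar>c\<bar> + 1)" using k by simp
      also have "\<dots> < 1" by simp
      finally show ?thesis .
    qed
    have z1: "1 + z > 0" using z by auto
    have S: "(\<lambda>n. ((-1/2) gchoose n) * z^n) sums (1 + z) powr (-1/2)"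
      by (rule gen_binomial_real[OF z])
    have P: "(1 + z) powr (-1/2) = 1 / sqrt (1 + z)"
      using z1 by (simp add: powr_minus_divide powr_half_sqrt)
    have Q: "sqrt (c * s^2 + k) = sqrt k * sqrt (1 + z)"
    proof -
      have "c * s^2 + k = k * (1 + z)" using k by (simp add: z_def field_simps)
      then show ?thesis by (simp add: real_sqrt_mult)
    qed
    have S2: "(\<lambda>n. (m / sqrt k * s) * (((-1/2) gchoose n) * z^n)) sums (m / sqrt k * s * (1 / sqrt (1 + z)))"
      using sums_mult[OF S, of "m / sqrt k * s"] P by (simp add: mult.commute)
    have E: "(\<lambda>n. C (2*n+1) * s^(2*n+1)) = (\<lambda>n. (m / sqrt k * s) * (((-1/2) gchoose n) * z^n))"
      by (rule ext) (simp add: C_def z_def power_mult_distrib power_mult field_simps power2_eq_square)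
    have sm: "strict_mono (\<lambda>n::nat. 2*n+1)" by (rule strict_monoI) simp
    have "(\<lambda>n. C n * s^n) sums (m / sqrt k * s * (1 / sqrt (1 + z)))"
      apply (subst sums_mono_reindex[OF sm, symmetric])
      subgoal for n using odd_in_range[of n] by (auto simp: C_def)
      using S2 E by simp
    then show "(\<lambda>n. C n * s ^ n) sums (m * s / sqrt (c * s\<^sup>2 + k))"
      using Q by simp
  qed
qed

lemma angle_param:
  fixes hr :: "real \<Rightarrow> real" and \<alpha>0 :: real
  assumes cont: "continuous_on UNIV hr"
    and pos: "\<And>\<beta>. 0 < 1 + hr \<beta>"
    and per: "\<And>\<beta>. hr (\<beta> + 2*pi) = hr \<beta>"
    and sym1: "\<And>\<beta>. hr (2*pi - \<beta>) = hr \<beta>"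
    and anti: "\<And>\<beta>. hr (pi - \<beta>) = - hr \<beta>"
  shows "\<exists>\<alpha>. (\<forall>t. (\<alpha> has_real_derivative inverse (1 + hr (\<alpha> t))) (at t)) \<and> \<alpha> 0 = \<alpha>0 \<and>
            (\<forall>t. \<alpha> (t + 2*pi) = \<alpha> t + 2*pi) \<and> (\<forall>s t. s < t \<longrightarrow> \<alpha> s < \<alpha> t) \<and>
            (\<forall>\<beta>. \<exists>t. \<alpha> t = \<beta>)"
proof -
  have ic: "isCont hr x" for x
    using cont by (simp add: continuous_on_eq_continuous_at)
  obtain G where G0: "\<forall>x::real. (-\<infinity>::ereal) < x \<longrightarrow> x < \<infinity> \<longrightarrow> (G has_vector_derivative hr x) (at x)"
    using einterval_antiderivative[of "-\<infinity>" "\<infinity>" hr] ic by auto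
  have G: "(G has_real_derivative hr x) (at x)" for x
    using G0 by (simp add: has_real_derivative_iff_has_vector_derivative)
  define K where "K \<beta> = \<beta> + G \<beta>" for \<beta>
  have Kd: "(K has_real_derivative 1 + hr x) (at x)" for x
    unfolding K_def by (auto intro!: derivative_eq_intros G)
  have Kc: "continuous_on S K" for S
    using Kd by (meson DERIV_continuous continuous_at_imp_continuous_on)
  have M: "G (2*pi - \<beta>) + G \<beta> = G (2*pi - 0) + G 0" for \<beta>
  proof (rule DERIV_isconst_all[where f="\<lambda>\<beta>. G (2*pi - \<beta>) + G \<beta>"], rule allI)
    fix x
    show "((\<lambda>\<beta>. G (2*pi - \<beta>) + G \<beta>) has_real_derivative 0) (at x)"
    proof -
      have d1: "((\<lambda>\<beta>. G (2*pi - \<beta>)) has_real_derivative hr (2*pi - x) * (-1)) (at x)"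
        by (rule DERIV_chain2[OF G]) (auto intro!: derivative_eq_intros)
      show ?thesis using DERIV_add[OF d1 G[of x]] sym1[of x] by simp
    qed
  qed
  have N: "G (pi - \<beta>) - G \<beta> = G (pi - 0) - G 0" for \<beta>
  proof (rule DERIV_isconst_all[where f="\<lambda>\<beta>. G (pi - \<beta>) - G \<beta>"], rule allI)
    fix x
    show "((\<lambda>\<beta>. G (pi - \<beta>) - G \<beta>) has_real_derivative 0) (at x)"
    proof -
      have d1: "((\<lambda>\<beta>. G (pi - \<beta>)) has_real_derivative hr (pi - x) * (-1)) (at x)"
        by (rule DERIV_chain2[OF G]) (auto intro!: derivative_eq_intros)
      show ?thesis using DERIV_diff[OF d1 G[of x]] anti[of x] by simp
    qed
  qed
  have Gpi: "G pi = G 0" using N[of pi] by simp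
  have G2pi: "G (2*pi) = G 0" using M[of pi] Gpi by simp
  have P: "G (\<beta> + 2*pi) - G \<beta> = G (0 + 2*pi) - G 0" for \<beta>
  proof (rule DERIV_isconst_all[where f="\<lambda>\<beta>. G (\<beta> + 2*pi) - G \<beta>"], rule allI)
    fix x
    show "((\<lambda>\<beta>. G (\<beta> + 2*pi) - G \<beta>) has_real_derivative 0) (at x)"
    proof -
      have d1: "((\<lambda>\<beta>. G (\<beta> + 2*pi)) has_real_derivative hr (x + 2*pi) * 1) (at x)"
        by (rule DERIV_chain2[OF G]) (auto intro!: derivative_eq_intros)
      show ?thesis using DERIV_diff[OF d1 G[of x]] per[of x] by simp
    qed
  qed
  have Kper: "K (\<beta> + 2*pi) = K \<beta> + 2*pi" for \<beta>
    using P[of \<beta>] G2pi by (simp add: K_def)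
  have Kmono: "K s < K t" if "s < t" for s t
    by (rule DERIV_pos_imp_increasing[OF that]) (use Kd pos in blast)
  have Kpn: "K (\<beta> + 2*pi*real n) = K \<beta> + 2*pi*real n" for \<beta> n
  proof (induction n)
    case (Suc n)
    have "K (\<beta> + 2*pi*real (Suc n)) = K ((\<beta> + 2*pi*real n) + 2*pi)" by (simp add: algebra_simps)
    also have "\<dots> = K (\<beta> + 2*pi*real n) + 2*pi" by (rule Kper)
    also have "\<dots> = K \<beta> + 2*pi*real (Suc n)" using Suc by (simp add: algebra_simps)
    finally show ?case .
  qed simp
  have Kmn: "K (\<beta> - 2*pi*real n) = K \<beta> - 2*pi*real n" for \<beta> n
    using Kpn[of "\<beta> - 2*pi*real n" n] by simp
  have Ksurj: "\<exists>\<beta>. K \<beta> = t" for t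
  proof -
    define n where "n = nat \<lceil>\<bar>t - K 0\<bar> / (2*pi)\<rceil>"
    have "\<bar>t - K 0\<bar> / (2*pi) \<le> real n" unfolding n_def by linarith
    then have n: "\<bar>t - K 0\<bar> \<le> 2*pi*real n" by (simp add: field_simps)
    have "\<exists>x. -2*pi*real n \<le> x \<and> x \<le> 2*pi*real n \<and> K x = t"
      by (rule IVT') (use Kpn[of 0 n] Kmn[of 0 n] n Kc in auto)
    then show ?thesis by blast
  qed
  define Ki where "Ki t = (THE \<beta>. K \<beta> = t)" for t
  have Kinj: "K a = K b \<Longrightarrow> a = b" for a b
    using Kmono by (metis linorder_neqE_linordered_idom order_less_irrefl)
  have KKi: "K (Ki t) = t" for t
    unfolding Ki_def by (rule theI') (use Ksurj Kinj in blast)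
  have KiK: "Ki (K b) = b" for b
    using KKi Kinj by blast
  have Kicont: "isCont Ki u" for u
    using isCont_inverse_function[of 1 "Ki u" Ki K] KiK KKi Kd DERIV_isCont by fastforce
  have Kid: "(Ki has_real_derivative inverse (1 + hr (Ki u))) (at u)" for u
    by (rule DERIV_inverse_function[where f=K and a="u-1" and b="u+1"])
       (use Kd pos KKi Kicont in \<open>auto simp: less_imp_neq[symmetric]\<close>)
  define \<alpha> where "\<alpha> t = Ki (t + K \<alpha>0)" for t
  show ?thesis
  proof (intro exI[of _ \<alpha>] conjI allI impI)
    fix t
    show "(\<alpha> has_real_derivative inverse (1 + hr (\<alpha> t))) (at t)"
    proof -
      have d: "((\<lambda>t. t + K \<alpha>0) has_real_derivative 1) (at t)" by (auto intro!: derivative_eq_intros)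
      show ?thesis unfolding \<alpha>_def using DERIV_chain2[OF Kid d] by simp
    qed
    show "\<alpha> (t + 2*pi) = \<alpha> t + 2*pi"
      unfolding \<alpha>_def by (metis KKi KiK Kper add.commute add.left_commute)
  next
    show "\<alpha> 0 = \<alpha>0" by (simp add: \<alpha>_def KiK)
  next
    fix s t :: real assume "s < t"
    then show "\<alpha> s < \<alpha> t" unfolding \<alpha>_def
      by (metis KKi Kmono add_less_cancel_right linorder_neqE_linordered_idom order_less_asym)
  next
    fix \<beta>
    show "\<exists>t. \<alpha> t = \<beta>" unfolding \<alpha>_def by (rule exI[of _ "K \<beta> - K \<alpha>0"]) (simp add: KiK)
  qed
qed

lemma mono_Xi:
  fixes Xi Xi' :: "real \<Rightarrow> real"
  assumes Xid: "\<And>x. \<bar>x\<bar> < \<delta> \<Longrightarrow> (Xi has_real_derivative Xi' x) (at x)"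
   and Xip: "\<And>x. \<bar>x\<bar> < \<delta> \<Longrightarrow> Xi' x > 0"
   and "\<bar>x\<bar> < \<delta>" "\<bar>y\<bar> < \<delta>" "x < y"
  shows "Xi x < Xi y"
proof (rule DERIV_pos_imp_increasing[OF \<open>x < y\<close>])
  fix z assume "x \<le> z" "z \<le> y"
  then have "\<bar>z\<bar> < \<delta>" using assms by linarith
  then show "\<exists>D. DERIV Xi z :> D \<and> D > 0" using Xid Xip by blast
qed

lemma inverse_setup:
  fixes Xi Xi' :: "real \<Rightarrow> real"
  assumes \<delta>: "\<delta> > 0"
   and Xid: "\<And>x. \<bar>x\<bar> < \<delta> \<Longrightarrow> (Xi has_real_derivative Xi' x) (at x)"
   and Xip: "\<And>x. \<bar>x\<bar> < \<delta> \<Longrightarrow> Xi' x > 0"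
   and Xi0: "Xi 0 = 0"
  obtains d R X where "0 < d" "d < \<delta>" "0 < R"
   "\<And>s. \<bar>s\<bar> < R \<Longrightarrow> Xi (X s) = s" "\<And>s. \<bar>s\<bar> < R \<Longrightarrow> \<bar>X s\<bar> < d"
   "\<And>s. \<bar>s\<bar> < R \<Longrightarrow> (X has_real_derivative inverse (Xi' (X s))) (at s)"
   "\<And>z. \<bar>z\<bar> \<le> d \<Longrightarrow> X (Xi z) = z"
proof -
  have mono: "Xi x < Xi y" if "\<bar>x\<bar> < \<delta>" "\<bar>y\<bar> < \<delta>" "x < y" for x y
    by (rule mono_Xi[OF Xid Xip that]) auto
  have monole: "Xi x \<le> Xi y" if "\<bar>x\<bar> < \<delta>" "\<bar>y\<bar> < \<delta>" "x \<le> y" for x y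
    using mono[OF that(1,2)] that(3) by (cases "x = y") auto
  have inj: "x = y" if "\<bar>x\<bar> < \<delta>" "\<bar>y\<bar> < \<delta>" "Xi x = Xi y" for x y
    using mono[OF that(1,2)] mono[OF that(2,1)] that(3) by (metis linorder_neqE_linordered_idom order_less_irrefl)
  define d where "d = \<delta>/2"
  have d: "0 < d" "d < \<delta>" using \<delta> by (auto simp: d_def)
  define R where "R = min (Xi d) (- Xi (-d))"
  have R: "0 < R" using mono[of 0 d] mono[of "-d" 0] d Xi0 by (auto simp: R_def)
  have ctn: "continuous_on {-d..d} Xi"
  proof (rule DERIV_atLeastAtMost_imp_continuous_on)
    fix x assume "-d \<le> x" "x \<le> d"
    then have "\<bar>x\<bar> < \<delta>" using d by auto
    then show "\<exists>y. DERIV Xi x :> y" using Xid by blast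
  qed
  define X where "X s = (SOME x. -d \<le> x \<and> x \<le> d \<and> Xi x = s)" for s
  have X1: "-d \<le> X s \<and> X s \<le> d \<and> Xi (X s) = s" if "Xi (-d) \<le> s" "s \<le> Xi d" for s
  proof -
    have "\<exists>x. -d \<le> x \<and> x \<le> d \<and> Xi x = s" by (rule IVT') (use that d ctn in auto)
    then show ?thesis unfolding X_def by (rule someI_ex)
  qed
  have XXi: "X (Xi z) = z" if "\<bar>z\<bar> \<le> d" for z
  proof -
    have "Xi (-d) \<le> Xi z" "Xi z \<le> Xi d" using that d by (auto intro!: monole)
    from X1[OF this] have "-d \<le> X (Xi z)" "X (Xi z) \<le> d" "Xi (X (Xi z)) = Xi z" by auto
    then show ?thesis using inj[of "X (Xi z)" z] that d by auto
  qed
  have XiX: "Xi (X s) = s" and Xb: "\<bar>X s\<bar> < d" if "\<bar>s\<bar> < R" for s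
  proof -
    have s: "Xi (-d) < s" "s < Xi d" using that by (auto simp: R_def)
    from X1 s have X: "-d \<le> X s" "X s \<le> d" "Xi (X s) = s" by auto
    then show "Xi (X s) = s" by simp
    have "X s \<noteq> d" "X s \<noteq> -d" using X s by auto
    then show "\<bar>X s\<bar> < d" using X by auto
  qed
  have Xd: "(X has_real_derivative inverse (Xi' (X s))) (at s)" if s: "\<bar>s\<bar> < R" for s
  proof -
    have der: "DERIV Xi (X s) :> Xi' (X s)" using Xid Xb[OF s] d by auto
    have nz: "Xi' (X s) \<noteq> 0" using Xip Xb[OF s] d by (metis less_irrefl order_less_trans)
    have s1: "-R < s" using s by auto
    have s2: "s < R" using s by auto
    have inj: "\<And>y. -R < y \<Longrightarrow> y < R \<Longrightarrow> Xi (X y) = y" using XiX by auto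
    have "isCont X (Xi (X s))"
    proof (rule isCont_inverse_function[where d="d - \<bar>X s\<bar>" and x="X s" and f=Xi and g=X])
      show "0 < d - \<bar>X s\<bar>" using Xb[OF s] by simp
      show "X (Xi z) = z" if "\<bar>z - X s\<bar> \<le> d - \<bar>X s\<bar>" for z using that by (intro XXi) auto
      show "isCont Xi z" if "\<bar>z - X s\<bar> \<le> d - \<bar>X s\<bar>" for z
      proof -
        have "\<bar>z\<bar> < \<delta>" using that d by linarith
        then show ?thesis using Xid DERIV_isCont by blast
      qed
    qed
    then have ic: "isCont X s" using XiX[OF s] by simp
    show ?thesis by (rule DERIV_inverse_function[OF der nz s1 s2 inj ic])
  qed
  show ?thesis by (rule that[OF d R XiX Xb Xd XXi])
qed

lemma iso_generic:
  fixes P1 P1' Q0 Q2 F Xi Xi' h :: "real \<Rightarrow> real" and V :: vfield and \<delta> \<epsilon> :: real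
  assumes \<delta>: "\<delta> > 0" and \<epsilon>: "\<epsilon> > 0"
  and P1d: "\<And>x. (P1 has_real_derivative P1' x) (at x)"
  and P1nz: "\<And>x. \<bar>x\<bar> < \<delta> \<Longrightarrow> P1 x \<noteq> 0"
  and Fd: "\<And>x. \<bar>x\<bar> < \<delta> \<Longrightarrow> (F has_real_derivative (- (Q2 x + P1' x) / P1 x)) (at x)"
  and Xid: "\<And>x. \<bar>x\<bar> < \<delta> \<Longrightarrow> (Xi has_real_derivative Xi' x) (at x)"
  and Xip: "\<And>x. \<bar>x\<bar> < \<delta> \<Longrightarrow> Xi' x > 0"
  and Xieq: "\<And>x. \<bar>x\<bar> < \<delta> \<Longrightarrow> Xi' x * (1 + h (Xi x)) = exp (F x)"
  and rel: "\<And>x. \<bar>x\<bar> < \<delta> \<Longrightarrow> Xi x = (1 + h (Xi x)) * (- P1 x * Q0 x * exp (F x))"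
  and Xi0: "Xi 0 = 0"
  and hpos: "\<And>s. \<bar>s\<bar> < \<epsilon> \<Longrightarrow> 0 < 1 + h s"
  and hodd: "\<And>s. \<bar>s\<bar> < \<epsilon> \<Longrightarrow> h (- s) = - h s"
  and hcont: "continuous_on {-\<epsilon><..<\<epsilon>} h"
  and V: "\<And>x y. V (x, y) = (P1 x * y, Q0 x + Q2 x * y^2)"
  shows "is_isochronous_center V"
proof -
  obtain d R0 X where d: "0 < d" "d < \<delta>" and R0: "0 < R0"
    and XiX: "\<And>s. \<bar>s\<bar> < R0 \<Longrightarrow> Xi (X s) = s"
    and Xb: "\<And>s. \<bar>s\<bar> < R0 \<Longrightarrow> \<bar>X s\<bar> < d"
    and Xd: "\<And>s. \<bar>s\<bar> < R0 \<Longrightarrow> (X has_real_derivative inverse (Xi' (X s))) (at s)"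
    and XXi: "\<And>z. \<bar>z\<bar> \<le> d \<Longrightarrow> X (Xi z) = z"
    using inverse_setup[OF \<delta> Xid Xip Xi0] by blast
  define R where "R = min R0 \<epsilon>"
  have R: "0 < R" "R \<le> R0" "R \<le> \<epsilon>" using R0 \<epsilon> by (auto simp: R_def)
  have Xiinj: "x = y" if "\<bar>x\<bar> < \<delta>" "\<bar>y\<bar> < \<delta>" "Xi x = Xi y" for x y
    using mono_Xi[OF Xid Xip that(1,2)] mono_Xi[OF Xid Xip that(2,1)] that(3)
    by (metis linorder_neqE_linordered_idom order_less_irrefl)
  define \<Psi> where "\<Psi> a b = (X a, b * exp (- F (X a)) / P1 (X a))" for a b
  define Nf where "Nf p = (Xi (fst p))^2 + (P1 (fst p) * snd p * exp (F (fst p)))^2" for p :: "real \<times> real"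
  have \<Phi>\<Psi>1: "Xi (fst (\<Psi> a b)) = a" and \<Phi>\<Psi>2: "P1 (fst (\<Psi> a b)) * snd (\<Psi> a b) * exp (F (fst (\<Psi> a b))) = b"
    and \<Psi>b: "\<bar>fst (\<Psi> a b)\<bar> < d" if "\<bar>a\<bar> < R" for a b
  proof -
    have a: "\<bar>a\<bar> < R0" using that R by auto
    show "Xi (fst (\<Psi> a b)) = a" using XiX[OF a] by (simp add: \<Psi>_def)
    show "\<bar>fst (\<Psi> a b)\<bar> < d" using Xb[OF a] by (simp add: \<Psi>_def)
    have "P1 (X a) \<noteq> 0" using Xb[OF a] d P1nz by auto
    then show "P1 (fst (\<Psi> a b)) * snd (\<Psi> a b) * exp (F (fst (\<Psi> a b))) = b"
      by (simp add: \<Psi>_def exp_minus field_simps)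
  qed
  have NfPsi: "Nf (\<Psi> a b) = a^2 + b^2" if "\<bar>a\<bar> < R" for a b
    using \<Phi>\<Psi>1[OF that] \<Phi>\<Psi>2[OF that] by (simp add: Nf_def)
  have \<Psi>\<Phi>: "\<Psi> (Xi x) (P1 x * y * exp (F x)) = (x, y)" if "\<bar>x\<bar> \<le> d" for x y
  proof -
    have "P1 x \<noteq> 0" using that d P1nz by auto
    then show ?thesis using XXi[OF that] by (simp add: \<Psi>_def exp_minus field_simps)
  qed
  have \<Psi>inj: "a = a' \<and> b = b'" if "\<bar>a\<bar> < R" "\<bar>a'\<bar> < R" "\<Psi> a b = \<Psi> a' b'" for a b a' b'
    using \<Phi>\<Psi>1[OF that(1), of b] \<Phi>\<Psi>1[OF that(2), of b'] \<Phi>\<Psi>2[OF that(1), of b] \<Phi>\<Psi>2[OF that(2), of b'] that(3)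
    by metis
  have Xic: "isCont Xi x" if "\<bar>x\<bar> < \<delta>" for x using Xid[OF that] DERIV_isCont by blast
  have Fc: "isCont F x" if "\<bar>x\<bar> < \<delta>" for x using Fd[OF that] DERIV_isCont by blast
  have P1c: "isCont P1 x" for x using P1d DERIV_isCont by blast
  have Xc: "isCont X s" if "\<bar>s\<bar> < R" for s using Xd[of s] that R DERIV_isCont by auto
  have openN: "open {p. \<bar>fst p\<bar> < d \<and> Nf p < c}" for c
  proof -
    have o1: "open {p :: real \<times> real. \<bar>fst p\<bar> < d}"
      by (rule open_Collect_less) (auto intro!: continuous_intros)
    have cN: "continuous_on {p :: real \<times> real. \<bar>fst p\<bar> < d} Nf"
    proof (rule continuous_at_imp_continuous_on, rule ballI)
      fix p :: "real \<times> real" assume "p \<in> {p. \<bar>fst p\<bar> < d}"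
      then have px: "\<bar>fst p\<bar> < \<delta>" using d by auto
      have c1: "isCont (\<lambda>p. Xi (fst p)) p" by (rule isCont_o2[where f=fst and g=Xi, OF _ Xic[OF px]]) (auto intro!: continuous_intros)
      have c2: "isCont (\<lambda>p. F (fst p)) p" by (rule isCont_o2[where f=fst and g=F, OF _ Fc[OF px]]) (auto intro!: continuous_intros)
      have c3: "isCont (\<lambda>p. P1 (fst p)) p" by (rule isCont_o2[where f=fst and g=P1, OF _ P1c]) (auto intro!: continuous_intros)
      show "isCont Nf p" unfolding Nf_def using c1 c2 c3 by (auto intro!: continuous_intros)
    qed
    have "open (Nf -` {..<c} \<inter> {p. \<bar>fst p\<bar> < d})"
      using iffD1[OF continuous_on_open_vimage[OF o1] cN, rule_format, of "{..<c}"] by simp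
    moreover have "Nf -` {..<c} \<inter> {p. \<bar>fst p\<bar> < d} = {p. \<bar>fst p\<bar> < d \<and> Nf p < c}" by auto
    ultimately show ?thesis by simp
  qed
  have \<Psi>cont: "continuous_on (cball 0 r) (\<lambda>q. \<Psi> (fst q) (snd q))" if "r < R" for r
  proof (rule continuous_at_imp_continuous_on, rule ballI)
    fix q :: "real \<times> real" assume "q \<in> cball 0 r"
    then have "norm q \<le> r" by simp
    moreover have "\<bar>fst q\<bar> \<le> norm q" using norm_fst_le[of "fst q" "snd q"] by simp
    ultimately have q: "\<bar>fst q\<bar> < R" using that by linarith
    then have qx: "\<bar>X (fst q)\<bar> < \<delta>" using Xb[of "fst q"] R d by auto
    have c1: "isCont (\<lambda>q. X (fst q)) q" by (rule isCont_o2[where f=fst and g=X, OF _ Xc[OF q]]) (auto intro!: continuous_intros)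
    have c2: "isCont (\<lambda>q. F (X (fst q))) q" by (rule isCont_o2[where g=F, OF c1 Fc[OF qx]])
    have c3: "isCont (\<lambda>q. P1 (X (fst q))) q" by (rule isCont_o2[where g=P1, OF c1 P1c])
    have nz: "P1 (X (fst q)) \<noteq> 0" using P1nz qx by auto
    show "isCont (\<lambda>q. \<Psi> (fst q) (snd q)) q" unfolding \<Psi>_def
      using c1 c2 c3 nz by (auto intro!: continuous_intros)
  qed
  define U where "U = {p. \<bar>fst p\<bar> < d \<and> Nf p < R^2}"
  have Uopen: "open U" unfolding U_def by (rule openN)
  have U0: "(0, 0) \<in> U" using d R Xi0 by (simp add: U_def Nf_def)
  have orbit: "\<exists>phi. closed_orbit_through V phi p (2*pi)" if p: "p \<in> U - {(0, 0)}" for p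
  proof -
    obtain x0 y0 where p0: "p = (x0, y0)" by (cases p)
    have x0: "\<bar>x0\<bar> < d" and Np: "Nf p < R^2" and pnz: "p \<noteq> (0,0)" using p by (auto simp: U_def p0)
    define \<xi>0 where "\<xi>0 = Xi x0"
    define w0 where "w0 = P1 x0 * y0 * exp (F x0)"
    define r where "r = sqrt (\<xi>0^2 + w0^2)"
    have Nfp: "Nf p = \<xi>0^2 + w0^2" by (simp add: Nf_def p0 \<xi>0_def w0_def)
    have "sqrt (\<xi>0^2 + w0^2) < sqrt (R^2)" using Np Nfp by (intro real_sqrt_less_mono) simp
    then have rR: "r < R" using R by (simp add: r_def)
    have nz: "\<xi>0^2 + w0^2 \<noteq> 0"
    proof
      assume "\<xi>0^2 + w0^2 = 0"
      then have "\<xi>0 = 0" "w0 = 0" by (auto simp: power2_eq_square add_nonneg_eq_0_iff)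
      then have "Xi x0 = Xi 0" using Xi0 by (simp add: \<xi>0_def)
      then have "x0 = 0" using Xiinj[of x0 0] x0 d \<delta> by auto
      moreover have "P1 0 \<noteq> 0" using P1nz \<delta> by auto
      ultimately have "y0 = 0" using \<open>w0 = 0\<close> by (simp add: w0_def)
      then show False using pnz p0 \<open>x0 = 0\<close> by simp
    qed
    have r0: "r > 0" using nz by (simp add: r_def add_nonneg_pos sum_power2_gt_zero_iff)
    have r2: "r^2 = \<xi>0^2 + w0^2" by (simp add: r_def)
    have "(\<xi>0 / r)^2 + (- w0 / r)^2 = (\<xi>0^2 + w0^2) / r^2" by (simp add: power_divide add_divide_distrib)
    also have "\<dots> = 1" using r2 nz by simp
    finally have "(\<xi>0 / r)^2 + (- w0 / r)^2 = 1" .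
    then obtain \<alpha>0 where c0: "\<xi>0 / r = cos \<alpha>0" and s0: "- w0 / r = sin \<alpha>0"
      using sincos_total_2pi by metis
    have c0': "r * cos \<alpha>0 = \<xi>0" and s0': "- r * sin \<alpha>0 = w0"
      using c0 s0 r0 by (auto simp: field_simps)
    have rc: "\<bar>r * cos \<beta>\<bar> \<le> r" for \<beta>
      using r0 abs_cos_le_one[of \<beta>] by (simp add: abs_mult mult_left_le)
    have rcR: "\<bar>r * cos \<beta>\<bar> < R" for \<beta> using rc[of \<beta>] rR by linarith
    have rce: "\<bar>r * cos \<beta>\<bar> < \<epsilon>" for \<beta> using rcR[of \<beta>] R by linarith
    define hr where "hr \<beta> = h (r * cos \<beta>)" for \<beta>
    have hrc: "continuous_on UNIV hr" unfolding hr_def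
      by (rule continuous_on_compose2[OF hcont]) (use rce in \<open>auto intro!: continuous_intros simp: abs_less_iff minus_less_iff\<close>)
    have hrpos: "0 < 1 + hr \<beta>" for \<beta> using hpos rce by (simp add: hr_def)
    have hrper: "hr (\<beta> + 2*pi) = hr \<beta>" for \<beta> by (simp add: hr_def)
    have hrsym: "hr (2*pi - \<beta>) = hr \<beta>" for \<beta> by (simp add: hr_def)
    have hranti: "hr (pi - \<beta>) = - hr \<beta>" for \<beta>
      using hodd[OF rce[of \<beta>]] by (simp add: hr_def)
    obtain \<alpha> where D\<alpha>: "\<And>t. (\<alpha> has_real_derivative inverse (1 + hr (\<alpha> t))) (at t)"
      and \<alpha>0: "\<alpha> 0 = \<alpha>0" and \<alpha>per: "\<And>t. \<alpha> (t + 2*pi) = \<alpha> t + 2*pi"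
      and \<alpha>mono: "\<And>s t. s < t \<Longrightarrow> \<alpha> s < \<alpha> t" and \<alpha>surj: "\<And>\<beta>. \<exists>t. \<alpha> t = \<beta>"
      using angle_param[OF hrc hrpos hrper hrsym hranti, of \<alpha>0] by metis
    define phi where "phi t = \<Psi> (r * cos (\<alpha> t)) (- r * sin (\<alpha> t))" for t
    have phi0: "phi 0 = p"
    proof -
      have "- (r * sin \<alpha>0) = w0" using s0' by simp
      then show ?thesis using \<Psi>\<Phi>[of x0 y0] x0 by (simp add: phi_def \<alpha>0 c0' p0 \<xi>0_def w0_def)
    qed
    have Nfphi: "Nf (phi t) = r^2" for t
    proof -
      have "Nf (phi t) = (r * cos (\<alpha> t))^2 + (- r * sin (\<alpha> t))^2"
        unfolding phi_def by (rule NfPsi[OF rcR])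
      also have "\<dots> = r^2 * ((sin (\<alpha> t))^2 + (cos (\<alpha> t))^2)" by (simp only: power_mult_distrib algebra_simps power2_minus)
      also have "\<dots> = r^2" by simp
      finally show ?thesis .
    qed
    have phib: "\<bar>fst (phi t)\<bar> < d" for t unfolding phi_def by (rule \<Psi>b[OF rcR])
    have deriv: "(phi has_vector_derivative V (phi t)) (at t)" for t
    proof -
      define \<beta> where "\<beta> = \<alpha> t"
      define a where "a = r * cos \<beta>"
      define b where "b = - r * sin \<beta>"
      define Hh where "Hh = 1 + h a"
      define x where "x = X a"
      define E where "E = exp (F x)"
      have aR: "\<bar>a\<bar> < R" using rcR by (simp add: a_def)
      have aR0: "\<bar>a\<bar> < R0" using aR R by linarith
      have xd: "\<bar>x\<bar> < d" using Xb[OF aR0] by (simp add: x_def)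
      have xD: "\<bar>x\<bar> < \<delta>" using xd d by linarith
      have Hh: "Hh > 0" using hpos[of a] aR R by (simp add: Hh_def)
      have E: "E > 0" by (simp add: E_def)
      have P1x: "P1 x \<noteq> 0" using P1nz[OF xD] .
      have Xia: "Xi x = a" using XiX[OF aR0] by (simp add: x_def)
      have xieq: "Xi' x * Hh = E" using Xieq[OF xD] Xia by (simp add: Hh_def E_def)
      have rel': "a = Hh * (- P1 x * Q0 x * E)" using rel[OF xD] Xia by (simp add: Hh_def E_def)
      have D\<alpha>': "(\<alpha> has_real_derivative inverse Hh) (at t)"
        using D\<alpha>[of t] by (simp add: hr_def Hh_def a_def \<beta>_def)
      have Da: "((\<lambda>t. r * cos (\<alpha> t)) has_real_derivative b * inverse Hh) (at t)"
        by (rule DERIV_cong[OF DERIV_cmult[OF DERIV_chain2[OF DERIV_cos D\<alpha>']]]) (simp add: b_def \<beta>_def)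
      have Db: "((\<lambda>t. - r * sin (\<alpha> t)) has_real_derivative - a * inverse Hh) (at t)"
        by (rule DERIV_cong[OF DERIV_cmult[OF DERIV_chain2[OF DERIV_sin D\<alpha>']]]) (simp add: a_def \<beta>_def)
      have Xd': "(X has_real_derivative inverse (Xi' x)) (at (r * cos (\<alpha> t)))"
        using Xd[OF aR0] by (simp add: x_def a_def \<beta>_def)
      have Xi'x: "Xi' x = E / Hh" using xieq Hh by (simp add: field_simps)
      have Dx: "((\<lambda>t. X (r * cos (\<alpha> t))) has_real_derivative b / E) (at t)"
        by (rule DERIV_cong[OF DERIV_chain2[OF Xd' Da]]) (use Hh E in \<open>simp add: Xi'x field_simps\<close>)
      have xt: "X (r * cos (\<alpha> t)) = x" by (simp add: x_def a_def \<beta>_def)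
      have Fd': "(F has_real_derivative (- (Q2 x + P1' x) / P1 x)) (at (X (r * cos (\<alpha> t))))"
        using Fd[OF xD] xt by simp
      have P1d': "(P1 has_real_derivative P1' x) (at (X (r * cos (\<alpha> t))))"
        using P1d[of x] xt by simp
      have DF: "((\<lambda>t. F (X (r * cos (\<alpha> t)))) has_real_derivative (- (Q2 x + P1' x) / P1 x) * (b / E)) (at t)"
        by (rule DERIV_chain2[OF Fd' Dx])
      have DP: "((\<lambda>t. P1 (X (r * cos (\<alpha> t)))) has_real_derivative P1' x * (b / E)) (at t)"
        by (rule DERIV_chain2[OF P1d' Dx])
      have Dexp: "((\<lambda>t. exp (- F (X (r * cos (\<alpha> t))))) has_real_derivative
                  exp (- F x) * (- ((- (Q2 x + P1' x) / P1 x) * (b / E)))) (at t)"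
        using DERIV_chain2[OF DERIV_exp DERIV_minus[OF DF]] xt by simp
      have Dnum: "((\<lambda>t. (- r * sin (\<alpha> t)) * exp (- F (X (r * cos (\<alpha> t))))) has_real_derivative
                  (- a * inverse Hh) * exp (- F x) + (exp (- F x) * (- ((- (Q2 x + P1' x) / P1 x) * (b / E)))) * b) (at t)"
        using DERIV_mult[OF Db Dexp] xt by (simp add: b_def \<beta>_def)
      have e: "exp (- F x) = inverse E" by (simp add: E_def exp_minus)
      have aa: "- a * inverse Hh * inverse E = P1 x * Q0 x"
        using rel' Hh E by (simp add: field_simps)
      have aa': "a = - (Hh * P1 x * Q0 x * E)" using rel' by simp
      have bs: "- r * sin (\<alpha> t) = b" by (simp add: b_def \<beta>_def)
      have bs': "r * sin (\<alpha> t) = - b" by (simp add: b_def \<beta>_def)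
      have Dy: "((\<lambda>t. (- r * sin (\<alpha> t)) * exp (- F (X (r * cos (\<alpha> t)))) / P1 (X (r * cos (\<alpha> t))))
                 has_real_derivative Q0 x + Q2 x * (b * exp (- F x) / P1 x)^2) (at t)"
        using P1x xt Hh E by (intro DERIV_cong[OF DERIV_divide[OF Dnum DP]])
                  (simp_all add: bs bs' e field_simps power2_eq_square aa' E_def[symmetric])
      have phit: "phi = (\<lambda>t. (X (r * cos (\<alpha> t)), (- r * sin (\<alpha> t)) * exp (- F (X (r * cos (\<alpha> t)))) / P1 (X (r * cos (\<alpha> t)))))"
        by (rule ext) (simp add: phi_def \<Psi>_def)
      have Vphi: "V (phi t) = (b / E, Q0 x + Q2 x * (b * exp (- F x) / P1 x)^2)"
        using P1x E by (simp add: phit V xt b_def \<beta>_def E_def exp_minus field_simps)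
      show ?thesis unfolding Vphi
        apply (subst phit)
        apply (rule has_vector_derivative_Pair)
        using Dx Dy by (simp_all add: has_real_derivative_iff_has_vector_derivative)
    qed
    have minper: "phi s \<noteq> p" if s: "0 < s" "s < 2*pi" for s
    proof
      assume eq: "phi s = p"
      have "\<Psi> (r * cos (\<alpha> s)) (- r * sin (\<alpha> s)) = \<Psi> (r * cos (\<alpha> 0)) (- r * sin (\<alpha> 0))"
        using eq phi0 by (simp add: phi_def)
      from \<Psi>inj[OF rcR rcR this] r0
      have "cos (\<alpha> s) = cos (\<alpha> 0)" "sin (\<alpha> s) = sin (\<alpha> 0)" by auto
      then obtain n :: int where n: "\<alpha> s = \<alpha> 0 + 2 * pi * n" using sin_cos_eq_iff by metis
      have "\<alpha> 0 < \<alpha> s" using \<alpha>mono s by auto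
      moreover have "\<alpha> s < \<alpha> 0 + 2*pi" using \<alpha>mono[of s "0 + 2*pi"] s \<alpha>per[of 0] by auto
      ultimately have A: "0 < 2*pi*real_of_int n" "2*pi*real_of_int n < 2*pi*1" using n by linarith+
      have "0 < real_of_int n" using A(1) pi_gt_zero by (simp add: zero_less_mult_iff)
      moreover have "real_of_int n < 1" using A(2) pi_gt_zero by (simp only: mult_less_cancel_left)
      ultimately have "0 < n" "n < 1" by simp_all
      then show False by simp
    qed
    have inside: "(0, 0) \<in> inside (range phi)"
    proof -
      define S where "S = range phi"
      define A where "A = {p. \<bar>fst p\<bar> < d \<and> Nf p < r^2}"
      define Cr where "Cr = (\<lambda>q. \<Psi> (fst q) (snd q)) ` cball 0 r"
      have Aopen: "open A" unfolding A_def by (rule openN)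
      have Crc: "compact Cr" unfolding Cr_def
        by (rule compact_continuous_image[OF \<Psi>cont[OF rR] compact_cball])
      have normq: "norm (a, b) = sqrt (a^2 + b^2)" for a b :: real by (simp add: norm_Pair)
      have A0: "(0, 0) \<in> A" using d r0 Xi0 by (simp add: A_def Nf_def)
      have S0: "(0, 0) \<notin> S"
      proof
        assume "(0, 0) \<in> S"
        then obtain t where "phi t = (0, 0)" by (auto simp: S_def)
        then have "Nf (0, 0) = r^2" using Nfphi[of t] by simp
        then show False using Xi0 r0 by (simp add: Nf_def)
      qed
      have ACr: "A \<subseteq> Cr"
      proof
        fix z assume z: "z \<in> A"
        obtain x y where zxy: "z = (x, y)" by (cases z)
        have x: "\<bar>x\<bar> < d" and N: "Nf z < r^2" using z by (auto simp: A_def zxy)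
        define q where "q = (Xi x, P1 x * y * exp (F x))"
        have "norm q = sqrt (Nf z)" by (simp add: q_def normq Nf_def zxy)
        also have "\<dots> < sqrt (r^2)" using N by (intro real_sqrt_less_mono)
        also have "\<dots> = r" using r0 by simp
        finally have "q \<in> cball 0 r" by simp
        moreover have "z = \<Psi> (fst q) (snd q)" using \<Psi>\<Phi>[of x y] x by (simp add: q_def zxy)
        ultimately show "z \<in> Cr" unfolding Cr_def by blast
      qed
      have cover: "- S \<subseteq> A \<union> - Cr"
      proof
        fix z assume zS: "z \<in> - S"
        show "z \<in> A \<union> - Cr"
        proof (cases "z \<in> Cr")
          case False then show ?thesis by simp
        next
          case True
          then obtain a b where ab: "(a, b) \<in> cball 0 r" and z: "z = \<Psi> a b"
            unfolding Cr_def by auto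
          have ab2: "sqrt (a^2 + b^2) \<le> r" using ab normq[of a b] by simp
          then have "a^2 + b^2 \<le> r^2"
            using r0 by (metis real_sqrt_le_iff real_sqrt_pow2_iff abs_of_pos real_sqrt_abs sqrt_le_D)
          have "\<bar>a\<bar> \<le> sqrt (a^2 + b^2)" by (simp add: real_sqrt_ge_abs1)
          then have aR: "\<bar>a\<bar> < R" using ab2 rR by linarith
          have ne: "a^2 + b^2 \<noteq> r^2"
          proof
            assume eq: "a^2 + b^2 = r^2"
            have "(a / r)^2 + (- b / r)^2 = (a^2 + b^2) / r^2" by (simp add: power_divide add_divide_distrib)
            also have "\<dots> = 1" using eq r0 by simp
            finally have "(a / r)^2 + (- b / r)^2 = 1" .
            then obtain \<gamma> where c: "a / r = cos \<gamma>" and s: "- b / r = sin \<gamma>"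
              using sincos_total_2pi by metis
            obtain t where t: "\<alpha> t = \<gamma>" using \<alpha>surj by blast
            have "r * cos \<gamma> = a" "- r * sin \<gamma> = b" using c s r0 by (auto simp: field_simps)
            then have "phi t = z" by (simp add: phi_def t z)
            then show False using zS by (auto simp: S_def)
          qed
          with \<open>a^2 + b^2 \<le> r^2\<close> have "a^2 + b^2 < r^2" by simp
          then have "z \<in> A" using NfPsi[OF aR, of b] \<Psi>b[OF aR, of b] by (simp add: A_def z)
          then show ?thesis by simp
        qed
      qed
      define C where "C = connected_component_set (- S) (0, 0)"
      have C1: "connected C" by (simp add: C_def)
      have C2: "C \<subseteq> - S" by (simp add: C_def connected_component_subset)
      have C3: "(0, 0) \<in> C" using S0 by (simp add: C_def)
      have "A \<inter> - Cr \<inter> C = {}" using ACr by auto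
      from connectedD[OF C1 Aopen _ this] C2 cover Crc
      have "A \<inter> C = {} \<or> - Cr \<inter> C = {}" by (auto simp: compact_imp_closed open_Compl)
      then have "C \<subseteq> A" using C2 cover C3 A0 by blast
      then have "bounded C" using ACr Crc by (meson bounded_subset compact_imp_bounded subset_trans)
      then show ?thesis using S0 by (simp add: inside_def S_def C_def)
    qed
    have "closed_orbit_through V phi p (2*pi)"
      unfolding closed_orbit_through_def
      using phi0 deriv minper inside by (auto simp: phi_def \<alpha>per)
    then show ?thesis by blast
  qed
  have c: "\<forall>p\<in>U - {(0,0)}. \<exists>phi. closed_orbit_through V phi p (2*pi)" using orbit by blast
  have c2: "\<forall>p\<in>U - {(0,0)}. \<exists>phi T. closed_orbit_through V phi p T" using c by blast
  have "is_center V" unfolding is_center_def by (intro exI[of _ U] conjI Uopen U0 c2)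
  then show ?thesis unfolding is_isochronous_center_def
    by (intro conjI exI[of _ U] exI[of _ "2*pi"] Uopen U0 c)
qed

lemma urabe_generic:
  fixes pP qZ qT :: "real poly" and F Xi Xi' h :: "real \<Rightarrow> real" and V :: vfield and \<delta> \<epsilon> :: real
  assumes V: "\<And>x y. V (x, y) = (poly pP x * y, poly qZ x + poly qT x * y^2)"
  and q00: "poly qZ 0 = 0"
  and \<delta>: "\<delta> > 0" and \<epsilon>: "\<epsilon> > 0"
  and P1nz: "\<And>x. \<bar>x\<bar> < \<delta> \<Longrightarrow> poly pP x \<noteq> 0"
  and Fd: "\<And>x. \<bar>x\<bar> < \<delta> \<Longrightarrow> (F has_real_derivative (- (poly qT x + poly (pderiv pP) x) / poly pP x)) (at x)"
  and F0: "F 0 = 0"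
  and Xid: "\<And>x. \<bar>x\<bar> < \<delta> \<Longrightarrow> (Xi has_real_derivative Xi' x) (at x)"
  and Xip: "\<And>x. \<bar>x\<bar> < \<delta> \<Longrightarrow> Xi' x > 0"
  and Xieq: "\<And>x. \<bar>x\<bar> < \<delta> \<Longrightarrow> Xi' x * (1 + h (Xi x)) = exp (F x)"
  and rel: "\<And>x. \<bar>x\<bar> < \<delta> \<Longrightarrow> Xi x = (1 + h (Xi x)) * (- poly pP x * poly qZ x * exp (F x))"
  and Xi0: "Xi 0 = 0"
  and hpos: "\<And>s. \<bar>s\<bar> < \<epsilon> \<Longrightarrow> 0 < 1 + h s"
  and hodd: "\<And>s. \<bar>s\<bar> < \<epsilon> \<Longrightarrow> h (- s) = - h s"
  and hcont: "continuous_on {-\<epsilon><..<\<epsilon>} h"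
  and han: "odd_analytic_near_0 h"
  shows "urabe_function V h"
proof -
  have iso: "is_isochronous_center V"
    by (rule iso_generic[
          OF \<delta> \<epsilon> poly_DERIV P1nz Fd Xid Xip Xieq rel Xi0 hpos hodd hcont V])
  define f where "f x = - (poly qT x + poly (pderiv pP) x) / poly pP x" for x
  define g where "g x = - (poly pP x * poly qZ x)" for x
  have FoF: "oint 0 x f = F x" if "\<bar>x\<bar> < \<delta>" for x
    using oint_ftc[OF \<delta> Fd[unfolded f_def[symmetric]] that] F0 by simp
  have Hnz: "1 + h (Xi x) \<noteq> 0" if "\<bar>x\<bar> < \<delta>" for x
    using Xieq[OF that] by (metis exp_not_eq_zero mult_zero_right)
  have XiXi': "Xi s * Xi' s = g s * exp (2 * oint 0 s f)" if "\<bar>s\<bar> < \<delta>" for s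
  proof -
    have "Xi s * Xi' s = (- poly pP s * poly qZ s * exp (F s)) * (Xi' s * (1 + h (Xi s)))"
      by (subst rel[OF that]) (simp add: algebra_simps)
    also have "\<dots> = g s * (exp (F s) * exp (F s))" using Xieq[OF that] by (simp add: g_def)
    also have "\<dots> = g s * exp (2 * oint 0 s f)" using FoF[OF that] by (simp add: mult_exp_exp)
    finally show ?thesis .
  qed
  have I: "(Xi x)^2 / 2 = oint 0 x (\<lambda>s. g s * exp (2 * oint 0 s f))" if "\<bar>x\<bar> < \<delta>" for x
  proof -
    have "oint 0 x (\<lambda>s. g s * exp (2 * oint 0 s f)) = (Xi x)^2 / 2 - (Xi 0)^2 / 2"
    proof (rule oint_ftc[OF \<delta> _ that])
      fix s :: real assume s: "\<bar>s\<bar> < \<delta>"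
      show "((\<lambda>x. (Xi x)^2 / 2) has_real_derivative g s * exp (2 * oint 0 s f)) (at s)"
        using XiXi'[OF s] Xid[OF s] by (auto intro!: derivative_eq_intros simp: mult.commute)
    qed
    then show ?thesis using Xi0 by simp
  qed
  have pos: "x * Xi x > 0" if "\<bar>x\<bar> < \<delta>" "x \<noteq> 0" for x
  proof (cases "x > 0")
    case True
    then have "Xi 0 < Xi x" using mono_Xi[where x=0 and y=x, OF Xid Xip] that \<delta> by auto
    then show ?thesis using True Xi0 by simp
  next
    case False
    then have "x < 0" using that by simp
    then have "Xi x < Xi 0" using mono_Xi[where x=x and y=0, OF Xid Xip] that \<delta> by auto
    then show ?thesis using \<open>x < 0\<close> Xi0 by (simp add: mult_neg_neg)
  qed
  have U: "Xi x / (1 + h (Xi x)) = g x * exp (oint 0 x f)" if "\<bar>x\<bar> < \<delta>" for x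
    using rel[OF that] Hnz[OF that] FoF[OF that] by (simp add: g_def field_simps)
  show ?thesis
    unfolding urabe_function_def
    apply (intro conjI iso han)
    apply (rule exI[of _ 0], rule exI[of _ pP], rule exI[of _ qZ], rule exI[of _ 0], rule exI[of _ qT])
    apply (intro conjI)
    subgoal using V by simp
    subgoal by simp
    subgoal by (rule q00)
    subgoal using P1nz \<delta> by simp
    subgoal by simp
    subgoal
      unfolding Let_def f_def[symmetric]
      using \<delta> I pos U by (intro exI[of _ \<delta>] conjI exI[of _ Xi] allI impI) (auto simp: g_def)
    done
qed

lemma exp_nat_ln: "u > 0 \<Longrightarrow> exp (real n * ln u) = u ^ n"
  by (metis exp_ln exp_of_nat_mult)

lemma exp_neg_nat_ln: "u > 0 \<Longrightarrow> exp (- (real n * ln u)) = 1 / u ^ n"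
  by (simp add: exp_minus exp_nat_ln inverse_eq_divide)

lemma h_props:
  fixes m c k \<epsilon> :: real
  assumes k: "k > 0" and \<epsilon>: "\<epsilon> > 0" and c: "\<bar>c\<bar> * \<epsilon>^2 \<le> k / 2" and m: "m^2 * \<epsilon>^2 < k / 2"
  shows "\<And>s. \<bar>s\<bar> < \<epsilon> \<Longrightarrow> 0 < 1 + m * s / sqrt (c * s^2 + k)"
    and "\<And>s. \<bar>s\<bar> < \<epsilon> \<Longrightarrow> m * (- s) / sqrt (c * (- s)^2 + k) = - (m * s / sqrt (c * s^2 + k))"
    and "continuous_on {-\<epsilon><..<\<epsilon>} (\<lambda>s. m * s / sqrt (c * s^2 + k))"
proof -
  have s2: "s^2 \<le> \<epsilon>^2" if "\<bar>s\<bar> < \<epsilon>" for s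
    using that by (metis abs_ge_zero less_imp_le power2_abs power_mono)
  have den: "k / 2 \<le> c * s^2 + k" if "\<bar>s\<bar> < \<epsilon>" for s
  proof -
    have "- c \<le> \<bar>c\<bar>" by simp
    then have "- c * s^2 \<le> \<bar>c\<bar> * s^2" by (rule mult_right_mono) simp
    then have "- (c * s^2) \<le> \<bar>c\<bar> * s^2" by simp
    also have "\<dots> \<le> \<bar>c\<bar> * \<epsilon>^2" using s2[OF that] by (simp add: mult_left_mono)
    finally show ?thesis using c by linarith
  qed
  have pos: "0 < sqrt (c * s^2 + k)" if "\<bar>s\<bar> < \<epsilon>" for s using den[OF that] k by simp
  show "0 < 1 + m * s / sqrt (c * s^2 + k)" if s: "\<bar>s\<bar> < \<epsilon>" for s
  proof -
    have "(m * s)^2 = m^2 * s^2" by (simp add: power_mult_distrib)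
    also have "\<dots> \<le> m^2 * \<epsilon>^2" using s2[OF s] by (simp add: mult_left_mono)
    also have "\<dots> < c * s^2 + k" using m den[OF s] by linarith
    finally have "\<bar>m * s\<bar> < sqrt (c * s^2 + k)" by (simp add: real_less_rsqrt)
    then have "- (m * s) < sqrt (c * s^2 + k)" by linarith
    then show ?thesis using pos[OF s] by (simp add: field_simps)
  qed
  show "m * (- s) / sqrt (c * (- s)^2 + k) = - (m * s / sqrt (c * s^2 + k))" for s by simp
  show "continuous_on {-\<epsilon><..<\<epsilon>} (\<lambda>s. m * s / sqrt (c * s^2 + k))"
  proof -
    have "c * s^2 + k \<noteq> 0" if "s \<in> {-\<epsilon><..<\<epsilon>}" for s
      using den[of s] that k by (auto simp: abs_less_iff)
    then show ?thesis by (auto intro!: continuous_intros)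
  qed
qed

lemma case4:
  "urabe_function (\<lambda>(x, y). (- y + x * y, x - 3/2 * x^2 + y^2 + x^3 - 1/4 * x^4))
                  (\<lambda>s. s / sqrt (1 + s^2))"
proof -
  have hh: "(\<lambda>s::real. s / sqrt (1 + s^2)) = (\<lambda>s. 1 * s / sqrt (1 * s^2 + 1))"
    by (simp add: add.commute)
  note hp = h_props[of 1 "1/2" 1 1, simplified]
  have han: "odd_analytic_near_0 (\<lambda>s::real. s / sqrt (1 + s^2))"
    unfolding hh by (rule odd_analytic_h) simp
  define p1 :: "real poly" where "p1 = [:-1, 1:]"
  define q0 :: "real poly" where "q0 = [:0, 1, -3/2, 1, -1/4:]"
  define q2 :: "real poly" where "q2 = [:1:]"
  have P1: "poly p1 x = x - 1" for x by (simp add: p1_def)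
  have dP1: "poly (pderiv p1) x = 1" for x by (simp add: p1_def pderiv_pCons)
  have Q0: "poly q0 x = x - 3/2 * x^2 + x^3 - 1/4 * x^4" for x
    by (simp add: q0_def algebra_simps power2_eq_square power3_eq_cube power4_eq_xxxx)
  have Q2: "poly q2 x = 1" for x by (simp add: q2_def)
  show ?thesis
  proof (rule urabe_generic[where pP=p1 and qZ=q0 and qT=q2 and \<delta>="1/2" and \<epsilon>="1/2"
      and F="\<lambda>x. - (real 2 * ln (1 - x))" and Xi="\<lambda>x. (1 / (1 - x) - (1 - x)) / 2"
      and Xi'="\<lambda>x. (1 / (1 - x)^2 + 1) / 2"])
    show "\<And>x y. (case (x, y) of (x, y) \<Rightarrow> (- y + x * y, x - 3/2 * x^2 + y^2 + x^3 - 1/4 * x^4)) =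
        (poly p1 x * y, poly q0 x + poly q2 x * y^2)"
      by (simp add: P1 Q0 Q2 algebra_simps)
    show "poly q0 0 = 0" by (simp add: Q0)
    show "(0::real) < 1/2" by simp
    show "(0::real) < 1/2" by simp
    fix x :: real assume x: "\<bar>x\<bar> < 1/2"
    have u: "1 - x > 0" using x by simp
    show "poly p1 x \<noteq> 0" using u by (simp add: P1)
    show "((\<lambda>x. - (real 2 * ln (1 - x))) has_real_derivative
            - (poly q2 x + poly (pderiv p1) x) / poly p1 x) (at x)"
      using u by (auto intro!: derivative_eq_intros simp: P1 dP1 Q2 field_simps)
    have sq: "((1 / u + u) / 2)^2 = 1 + ((1 / u - u) / 2)^2" if "u > 0" for u :: real
      using that by (simp add: power2_eq_square field_simps)
    have s: "sqrt (1 + ((1 / (1 - x) - (1 - x)) / 2)^2) = (1 / (1 - x) + (1 - x)) / 2"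
      by (rule real_sqrt_unique) (use u sq[OF u] in \<open>simp_all add: add_pos_nonneg\<close>)
    have e: "exp (- (real 2 * ln (1 - x))) = 1 / (1 - x)^2" by (rule exp_neg_nat_ln[OF u])
    show "((\<lambda>x. (1 / (1 - x) - (1 - x)) / 2) has_real_derivative (1 / (1 - x)^2 + 1) / 2) (at x)"
      using u by (auto intro!: derivative_eq_intros simp: field_simps power2_eq_square)
    show "0 < (1 / (1 - x)^2 + 1) / 2" using u by (simp add: add_pos_nonneg)
    show "(1 / (1 - x)^2 + 1) / 2 * (1 + (1 / (1 - x) - (1 - x)) / 2 / sqrt (1 + ((1 / (1 - x) - (1 - x)) / 2)^2))
          = exp (- (real 2 * ln (1 - x)))"
    proof -
      have "(1 / u^2 + 1) / 2 * (1 + (1 / u - u) / 2 / ((1 / u + u) / 2)) = 1 / u^2" if "u > 0" for u :: real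
      proof -
        have A: "1 / u + u = (1 + u^2) / u" "1 / u - u = (1 - u^2) / u" using that by (simp_all add: field_simps power2_eq_square)
        have p: "1 + u^2 > 0" by (simp add: add_pos_nonneg)
        have nz: "2 * u^2 + 2 * u^4 \<noteq> 0" "u^2 + u^4 \<noteq> 0" using that by (smt (verit) zero_less_power)+
        have g: "(a / u / 2) / (b / u / 2) = a / b" for a b using that
          by (cases "b = 0") (simp_all add: field_simps)
        have r: "1 + ((1 - u^2) / u) / 2 / (((1 + u^2) / u) / 2) = 2 / (1 + u^2)"
          unfolding g using p by (simp add: field_simps)
        show ?thesis unfolding A r using that p nz by (simp add: field_simps)
      qed
      from this[OF u] show ?thesis unfolding s e .
    qed
    show "(1 / (1 - x) - (1 - x)) / 2 = (1 + (1 / (1 - x) - (1 - x)) / 2 / sqrt (1 + ((1 / (1 - x) - (1 - x)) / 2)^2)) *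
          (- poly p1 x * poly q0 x * exp (- (real 2 * ln (1 - x))))"
    proof -
      have H: "(1 / u - u) / 2 = (1 + (1 / u - u) / 2 / ((1 / u + u) / 2)) * (- (- u) * ((1 - u^4) / 4) * (1 / u^2))"
        if "u > 0" for u :: real
      proof -
        have A: "1 / u + u = (1 + u^2) / u" "1 / u - u = (1 - u^2) / u" using that by (simp_all add: field_simps power2_eq_square)
        have p: "1 + u^2 > 0" by (simp add: add_pos_nonneg)
        have nz: "2 * u^2 + 2 * u^4 \<noteq> 0" "u^2 + u^4 \<noteq> 0" using that by (smt (verit) zero_less_power)+
        have g: "(a / u / 2) / (b / u / 2) = a / b" for a b using that
          by (cases "b = 0") (simp_all add: field_simps)
        have r: "1 + ((1 - u^2) / u) / 2 / (((1 + u^2) / u) / 2) = 2 / (1 + u^2)"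
          unfolding g using p by (simp add: field_simps)
        show ?thesis unfolding A r using that p nz by (simp add: field_simps power2_eq_square power4_eq_xxxx)
      qed
      have q0': "poly q0 x = (1 - (1 - x)^4) / 4" unfolding Q0
        by (simp add: algebra_simps power2_eq_square power3_eq_cube power4_eq_xxxx)
      have p1': "poly p1 x = - (1 - x)" by (simp add: P1)
      show ?thesis unfolding s e q0' p1' by (rule H[OF u])
    qed
  next
    show "(\<lambda>x::real. (1 / (1 - x) - (1 - x)) / 2) 0 = 0" by simp
  qed (use hp han in \<open>auto simp: add.commute power2_eq_square\<close>)
qed

lemma deriv_div_sqrt:
  fixes Q :: "real \<Rightarrow> real"
  assumes "(Q has_real_derivative D) (at x)" "Q x > 0"
  shows "((\<lambda>x. x / sqrt (Q x)) has_real_derivative (2 * Q x - x * D) / (2 * Q x * sqrt (Q x))) (at x)"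
  using assms by (auto intro!: derivative_eq_intros simp: field_simps)

lemma deriv_ln_sqrt:
  fixes Q :: "real \<Rightarrow> real"
  assumes "(Q has_real_derivative D) (at x)" "Q x > 0"
  shows "((\<lambda>x. ln (sqrt (Q x))) has_real_derivative D / (2 * Q x)) (at x)"
  using assms by (auto intro!: derivative_eq_intros simp: field_simps)

lemma case3:
  fixes a :: real
  shows "urabe_function
           (\<lambda>(x, y). (- y + x * y - (3 * a + 2/9) * x^2 * y + a * x^3 * y,
                       x + (1/9 - 3 * a) * x * y^2))
           (\<lambda>s. s / sqrt ((1 - 27 * a) * s^2 + 9))"
proof -
  define c where "c = 1 - 27 * a"
  define \<epsilon> where "\<epsilon> = 1 / (\<bar>c\<bar> + 1)"
  have \<epsilon>: "\<epsilon> > 0" "\<epsilon> \<le> 1" by (auto simp: \<epsilon>_def)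
  have ce: "\<bar>c\<bar> * \<epsilon>^2 \<le> 9 / 2"
  proof -
    have "\<bar>c\<bar> * \<epsilon> \<le> 1" by (simp add: \<epsilon>_def field_simps)
    moreover have "\<bar>c\<bar> * \<epsilon>^2 = (\<bar>c\<bar> * \<epsilon>) * \<epsilon>" by (simp add: power2_eq_square)
    ultimately have "\<bar>c\<bar> * \<epsilon>^2 \<le> 1 * 1" using \<epsilon> by (metis mult_mono abs_ge_zero mult_nonneg_nonneg order_less_imp_le zero_le_one)
    then show ?thesis by simp
  qed
  have me: "1^2 * \<epsilon>^2 < 9 / 2"
  proof -
    have "\<epsilon>^2 \<le> 1" using \<epsilon> by (simp add: power_le_one)
    then show ?thesis by simp
  qed
  note hp = h_props[of 9 \<epsilon> c 1, OF _ \<epsilon>(1) ce me, simplified]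
  have hh: "(\<lambda>s::real. s / sqrt ((1 - 27 * a) * s^2 + 9)) = (\<lambda>s. 1 * s / sqrt (c * s^2 + 9))"
    by (simp add: c_def)
  have han: "odd_analytic_near_0 (\<lambda>s::real. s / sqrt ((1 - 27 * a) * s^2 + 9))"
    unfolding hh by (rule odd_analytic_h) simp
  define \<delta> where "\<delta> = 1 / (4 * (\<bar>a\<bar> + 1))"
  have \<delta>: "\<delta> > 0" "\<delta> \<le> 1/4" "\<bar>a\<bar> * \<delta> \<le> 1/4" by (auto simp: \<delta>_def field_simps)
  define Q where "Q = (\<lambda>x::real. 1 - 2/3 * x + 3 * a * x^2)"
  have Qd: "(Q has_real_derivative (- 2/3 + 6 * a * x)) (at x)" for x
    unfolding Q_def by (auto intro!: derivative_eq_intros)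
  have Qpos: "Q x > 0" and ux: "1 - x / 3 > 0" if "\<bar>x\<bar> < \<delta>" for x
  proof -
    have x: "\<bar>x\<bar> \<le> 1/4" using that \<delta> by linarith
    have "\<bar>3 * a * x^2\<bar> = 3 * (\<bar>a\<bar> * \<bar>x\<bar>) * \<bar>x\<bar>" by (simp add: abs_mult power2_eq_square)
    also have "\<dots> \<le> 3 * (\<bar>a\<bar> * \<delta>) * (1/4)"
      using that x by (intro mult_mono mult_left_mono) auto
    also have "\<dots> \<le> 3 * (1/4) * (1/4)" using \<delta>(3) by (simp add: mult.commute)
    finally have "\<bar>3 * a * x^2\<bar> \<le> 3/16" by simp
    then show "Q x > 0" using x by (simp add: Q_def abs_le_iff)
    show "1 - x / 3 > 0" using x by simp
  qed
  define p1 :: "real poly" where "p1 = [:-1, 1, -(3 * a + 2/9), a:]"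
  define q0 :: "real poly" where "q0 = [:0, 1:]"
  define q2 :: "real poly" where "q2 = [:0, 1/9 - 3 * a:]"
  have P1: "poly p1 x = - (1 - x / 3) * Q x" for x
    by (simp add: p1_def Q_def field_simps power2_eq_square power3_eq_cube)
  have dP1: "poly (pderiv p1) x = 1 - 2 * (3 * a + 2/9) * x + 3 * a * x^2" for x
    by (simp add: p1_def pderiv_pCons algebra_simps power2_eq_square)
  have Q0: "poly q0 x = x" for x by (simp add: q0_def)
  have Q2: "poly q2 x = (1/9 - 3 * a) * x" for x by (simp add: q2_def)
  show ?thesis
  proof (rule urabe_generic[where pP=p1 and qZ=q0 and qT=q2 and \<delta>=\<delta> and \<epsilon>=\<epsilon>
      and F="\<lambda>x. - (real 3 * ln (sqrt (Q x)))" and Xi="\<lambda>x. x / sqrt (Q x)"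
      and Xi'="\<lambda>x. (1 - x / 3) / (sqrt (Q x))^3"])
    show "\<And>x y. (case (x, y) of (x, y) \<Rightarrow> (- y + x * y - (3 * a + 2/9) * x^2 * y + a * x^3 * y,
                       x + (1/9 - 3 * a) * x * y^2)) =
        (poly p1 x * y, poly q0 x + poly q2 x * y^2)"
      by (simp add: P1 Q0 Q2 Q_def field_simps power2_eq_square power3_eq_cube)
    show "poly q0 0 = 0" by (simp add: Q0)
    show "0 < \<delta>" by (rule \<delta>(1))
    show "0 < \<epsilon>" by (rule \<epsilon>(1))
    fix x :: real assume x: "\<bar>x\<bar> < \<delta>"
    note Qx = Qpos[OF x] and u = ux[OF x]
    define S where "S = sqrt (Q x)"
    have S: "S > 0" "S^2 = Q x" using Qx by (simp_all add: S_def)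
    show "poly p1 x \<noteq> 0" using u Qx by (simp add: P1)
    show "((\<lambda>x. - (real 3 * ln (sqrt (Q x)))) has_real_derivative
            - (poly q2 x + poly (pderiv p1) x) / poly p1 x) (at x)"
    proof (rule DERIV_cong[OF DERIV_minus[OF DERIV_cmult[OF deriv_ln_sqrt[OF Qd Qx]]]])
      show "- (real 3 * ((- 2/3 + 6 * a * x) / (2 * Q x))) = - (poly q2 x + poly (pderiv p1) x) / poly p1 x"
      proof -
        have N: "poly q2 x + poly (pderiv p1) x = (1 - 9 * a * x) * (1 - x / 3)"
          unfolding Q2 dP1 by (simp add: field_simps power2_eq_square)
        have "- (poly q2 x + poly (pderiv p1) x) / poly p1 x = (1 - 9 * a * x) / Q x"
          unfolding N P1 using u Qx by (simp add: field_simps)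
        moreover have "- (real 3 * ((- 2/3 + 6 * a * x) / (2 * Q x))) = (1 - 9 * a * x) / Q x"
          using Qx by (simp add: field_simps)
        ultimately show ?thesis by simp
      qed
    qed
    show "((\<lambda>x. x / sqrt (Q x)) has_real_derivative (1 - x / 3) / (sqrt (Q x))^3) (at x)"
    proof (rule DERIV_cong[OF deriv_div_sqrt[OF Qd Qx]])
      show "(2 * Q x - x * (- 2/3 + 6 * a * x)) / (2 * Q x * sqrt (Q x)) = (1 - x / 3) / (sqrt (Q x))^3"
      proof -
        have num: "2 * Q x - x * (- 2/3 + 6 * a * x) = 2 * (1 - x / 3)"
          by (simp add: Q_def field_simps power2_eq_square)
        show ?thesis unfolding num unfolding S_def[symmetric] unfolding S(2)[symmetric] using S(1)
          by (simp add: field_simps power2_eq_square power3_eq_cube)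
      qed
    qed
    have e: "exp (- (real 3 * ln (sqrt (Q x)))) = 1 / S^3"
      unfolding S_def by (rule exp_neg_nat_ln) (use Qx in simp)
    have sq0: "(3 - x)^2 = (1 - 27 * a) * x^2 + 9 * S^2"
      unfolding S(2) Q_def by (simp add: field_simps power2_eq_square)
    have sq: "sqrt ((1 - 27 * a) * (x / sqrt (Q x))^2 + 9) = (3 - x) / S"
    proof (rule real_sqrt_unique)
      show "((3 - x) / S)^2 = (1 - 27 * a) * (x / sqrt (Q x))^2 + 9"
        unfolding S_def[symmetric] using S(1) sq0 by (simp add: power_divide field_simps)
      show "0 \<le> (3 - x) / S" using S(1) u by simp
    qed
    have r: "1 + x / S / ((3 - x) / S) = 3 / (3 - x)" using S(1) u by (simp add: field_simps)
    show "0 < (1 - x / 3) / (sqrt (Q x))^3" using u Qx by simp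
    show "(1 - x / 3) / (sqrt (Q x))^3 * (1 + x / sqrt (Q x) / sqrt ((1 - 27 * a) * (x / sqrt (Q x))^2 + 9))
          = exp (- (real 3 * ln (sqrt (Q x))))"
      unfolding sq e unfolding S_def[symmetric] r using S(1) u by (simp add: field_simps)
    show "x / sqrt (Q x) = (1 + x / sqrt (Q x) / sqrt ((1 - 27 * a) * (x / sqrt (Q x))^2 + 9)) *
          (- poly p1 x * poly q0 x * exp (- (real 3 * ln (sqrt (Q x)))))"
      unfolding sq e P1 Q0 unfolding S_def[symmetric] r unfolding S(2)[symmetric]
      using S(1) u by (simp add: field_simps power2_eq_square power3_eq_cube)
  next
    show "(\<lambda>x. x / sqrt (Q x)) 0 = 0" by simp
  next
    show "(\<lambda>x. - (real 3 * ln (sqrt (Q x)))) 0 = 0" by (simp add: Q_def)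
  qed (use hp han in \<open>auto simp: c_def\<close>)
qed

lemma deriv_Mform:
  fixes Q :: "real \<Rightarrow> real"
  assumes Qd: "(Q has_real_derivative D) (at x)" and Qx: "Q x > 0"
  shows "((\<lambda>x. 2/3 * (1 / (sqrt (Q x))^3 - (sqrt (Q x))^3)) has_real_derivative
           - D * (1 / (sqrt (Q x))^5 + sqrt (Q x))) (at x)"
proof -
  define S where "S = sqrt (Q x)"
  have S: "S > 0" "S^2 = Q x" using Qx by (simp_all add: S_def)
  have M: "((\<lambda>x. sqrt (Q x)) has_real_derivative D / (2 * S)) (at x)"
    using Qd Qx by (auto intro!: derivative_eq_intros simp: S_def field_simps)
  have p3: "((\<lambda>x. (sqrt (Q x))^3) has_real_derivative real 3 * S^(3 - Suc 0) * (D / (2 * S))) (at x)"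
    using DERIV_chain2[OF DERIV_pow[of 3] M] by (simp only: S_def)
  have i3: "((\<lambda>x. 1 / (sqrt (Q x))^3) has_real_derivative
      (0 * (sqrt (Q x))^3 - 1 * (real 3 * S^(3 - Suc 0) * (D / (2 * S)))) / ((sqrt (Q x))^3 * (sqrt (Q x))^3)) (at x)"
    by (rule DERIV_divide[OF DERIV_const p3]) (use Qx in simp)
  show ?thesis
    apply (rule DERIV_cong[OF DERIV_cmult[OF DERIV_diff[OF i3 p3]]])
    using S(1) unfolding S_def[symmetric]
    by (simp add: field_simps power2_eq_square power3_eq_cube eval_nat_numeral)
qed

lemma alg_case1:
  fixes M :: real assumes M: "M > 0"
  shows "sqrt (16 + 9 * (2/3 * (1 / M^3 - M^3))^2) = 2 * (1 / M^3 + M^3)"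
    and "1 + 3 * (2/3 * (1 / M^3 - M^3)) / (2 * (1 / M^3 + M^3)) = 2 / (1 + M^6)"
    and "- (- 1/2) * (1 / M^5 + M) * (2 / (1 + M^6)) = 1 / M^5"
    and "2/3 * (1 / M^3 - M^3) = 2 / (1 + M^6) *
           (- (- (M^2 * (1 - M^2 + (M^2)^2))) * ((1 - (M^2)^3) * (1 + M^2) / 3) * (1 / M^5))"
proof -
  have p6: "1 + M^6 > 0" by (simp add: add_pos_nonneg)
  have A: "1 / M^3 + M^3 = (1 + M^6) / M^3" "1 / M^3 - M^3 = (1 - M^6) / M^3"
    using M by (simp_all add: field_simps eval_nat_numeral)
  show "sqrt (16 + 9 * (2/3 * (1 / M^3 - M^3))^2) = 2 * (1 / M^3 + M^3)"
  proof (rule real_sqrt_unique)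
    show "(2 * (1 / M^3 + M^3))^2 = 16 + 9 * (2/3 * (1 / M^3 - M^3))^2"
      using M by (simp add: field_simps power2_eq_square eval_nat_numeral)
    show "0 \<le> 2 * (1 / M^3 + M^3)" using M by simp
  qed
  have g: "(3 * (2/3 * (a / M^3))) / (2 * (b / M^3)) = a / b" for a b using M
    by (cases "b = 0") (simp_all add: field_simps)
  show "1 + 3 * (2/3 * (1 / M^3 - M^3)) / (2 * (1 / M^3 + M^3)) = 2 / (1 + M^6)"
    unfolding A g using p6 by (simp add: field_simps)
  define P where "P = 1 + M^6"
  have P: "P > 0" using p6 by (simp add: P_def)
  have f5: "1 / M^5 + M = P / M^5" using M by (simp add: P_def field_simps eval_nat_numeral)
  show "- (- 1/2) * (1 / M^5 + M) * (2 / (1 + M^6)) = 1 / M^5"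
    unfolding f5 P_def[symmetric] using M P by (simp add: field_simps)
  have p2: "1 + M^2 > 0" by (simp add: add_pos_nonneg)
  have C: "1 - (M^2)^3 = 2 - P" by (simp add: P_def eval_nat_numeral)
  have C': "1 - M^6 = 2 - P" by (simp add: P_def)
  have R: "- (- (M^2 * Bq)) * ((2 - P) * (1 + M^2) / 3) * (1 / M^5) = 2 * (2 - P) / (3 * M^3) * (P / 2)"
    if "Bq * (1 + M^2) = P" for Bq
  proof -
    have "- (- (M^2 * Bq)) * ((2 - P) * (1 + M^2) / 3) * (1 / M^5) = M^2 * (Bq * (1 + M^2)) * (2 - P) / (3 * M^5)"
      using M by (simp add: field_simps)
    also have "\<dots> = 2 * (2 - P) / (3 * M^3) * (P / 2)" unfolding that using M by (simp add: field_simps eval_nat_numeral)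
    finally show ?thesis .
  qed
  have BB: "(1 - M^2 + (M^2)^2) * (1 + M^2) = P" by (simp add: P_def algebra_simps eval_nat_numeral)
  show "2/3 * (1 / M^3 - M^3) = 2 / (1 + M^6) *
           (- (- (M^2 * (1 - M^2 + (M^2)^2))) * ((1 - (M^2)^3) * (1 + M^2) / 3) * (1 / M^5))"
    unfolding C unfolding R[OF BB] P_def[symmetric] A(2) unfolding C[symmetric]
    using P M by (simp add: field_simps)
qed

lemma case1:
  "urabe_function
     (\<lambda>(x, y). (- y + x * y - 1/2 * x^2 * y + 1/8 * x^3 * y,
                 x - 3/4 * x^2 + 1/4 * y^2 + 5/24 * x^3 + 3/8 * x * y^2
                   - 1/16 * x^2 * y^2 - 1/48 * x^4))
     (\<lambda>s. 3 * s / sqrt (16 + 9 * s^2))"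
proof -
  have hh: "(\<lambda>s::real. 3 * s / sqrt (16 + 9 * s^2)) = (\<lambda>s. 3 * s / sqrt (9 * s^2 + 16))"
    by (simp add: add.commute)
  note hp = h_props[of 16 "1/2" 9 3, simplified]
  have han: "odd_analytic_near_0 (\<lambda>s::real. 3 * s / sqrt (16 + 9 * s^2))"
    unfolding hh by (rule odd_analytic_h) simp
  define Q where "Q = (\<lambda>x::real. 1 - x / 2)"
  have Qd: "(Q has_real_derivative (- 1/2)) (at x)" for x
    unfolding Q_def by (auto intro!: derivative_eq_intros)
  define p1 :: "real poly" where "p1 = [:-1, 1, -1/2, 1/8:]"
  define q0 :: "real poly" where "q0 = [:0, 1, -3/4, 5/24, -1/48:]"
  define q2 :: "real poly" where "q2 = [:1/4, 3/8, -1/16:]"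
  have P1: "poly p1 x = - (Q x * (1 - Q x + (Q x)^2))" for x
    by (simp add: p1_def Q_def field_simps power2_eq_square power3_eq_cube)
  have P1': "poly q2 x + poly (pderiv p1) x = 5/4 * (1 - Q x + (Q x)^2)" for x
    by (simp add: p1_def q2_def Q_def pderiv_pCons field_simps power2_eq_square)
  have Q0: "poly q0 x = (1 - (Q x)^3) * (1 + Q x) / 3" for x
    by (simp add: q0_def Q_def field_simps power2_eq_square power3_eq_cube power4_eq_xxxx)
  have V: "\<And>x y. (case (x, y) of (x, y) \<Rightarrow> (- y + x * y - 1/2 * x^2 * y + 1/8 * x^3 * y,
                 x - 3/4 * x^2 + 1/4 * y^2 + 5/24 * x^3 + 3/8 * x * y^2
                   - 1/16 * x^2 * y^2 - 1/48 * x^4)) =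
        (poly p1 x * y, poly q0 x + poly q2 x * y^2)"
    by (simp add: p1_def q0_def q2_def field_simps power2_eq_square power3_eq_cube power4_eq_xxxx)
  show ?thesis
  proof (rule urabe_generic[where pP=p1 and qZ=q0 and qT=q2 and \<delta>="1/2" and \<epsilon>="1/2"
      and F="\<lambda>x. - (real 5 * ln (sqrt (Q x)))"
      and Xi="\<lambda>x. 2/3 * (1 / (sqrt (Q x))^3 - (sqrt (Q x))^3)"
      and Xi'="\<lambda>x. - (- 1/2) * (1 / (sqrt (Q x))^5 + sqrt (Q x))", OF V])
    show "poly q0 0 = 0" by (simp add: q0_def)
    show "(0::real) < 1/2" by simp
    show "(0::real) < 1/2" by simp
    fix x :: real assume x: "\<bar>x\<bar> < 1/2"
    have Qx: "Q x > 0" using x by (simp add: Q_def)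
    define M where "M = sqrt (Q x)"
    have M: "M > 0" "M^2 = Q x" using Qx by (simp_all add: M_def)
    have A: "1 - Q x + (Q x)^2 > 0"
    proof -
      have "1 - Q x + (Q x)^2 = (Q x - 1/2)^2 + 3/4" by (simp add: power2_eq_square algebra_simps)
      then show ?thesis by (metis add_nonneg_pos zero_le_power2 zero_less_divide_iff zero_less_numeral)
    qed
    show "poly p1 x \<noteq> 0" using Qx A by (simp add: P1)
    show "((\<lambda>x. - (real 5 * ln (sqrt (Q x)))) has_real_derivative
            - (poly q2 x + poly (pderiv p1) x) / poly p1 x) (at x)"
    proof (rule DERIV_cong[OF DERIV_minus[OF DERIV_cmult[OF deriv_ln_sqrt[OF Qd Qx]]]])
      show "- (real 5 * (- 1/2 / (2 * Q x))) = - (poly q2 x + poly (pderiv p1) x) / poly p1 x"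
      proof -
        define B where "B = 1 - Q x + (Q x)^2"
        have B: "B > 0" using A by (simp add: B_def)
        show ?thesis unfolding P1 P1' B_def[symmetric] using Qx B by (simp add: field_simps)
      qed
    qed
    show "((\<lambda>x. 2/3 * (1 / (sqrt (Q x))^3 - (sqrt (Q x))^3)) has_real_derivative
            - (- 1/2) * (1 / (sqrt (Q x))^5 + sqrt (Q x))) (at x)"
      by (rule deriv_Mform[OF Qd Qx])
    have e: "exp (- (real 5 * ln (sqrt (Q x)))) = 1 / M^5"
      unfolding M_def by (rule exp_neg_nat_ln) (use Qx in simp)
    note al = alg_case1[OF M(1)]
    show "0 < - (- 1/2) * (1 / (sqrt (Q x))^5 + sqrt (Q x))"
      unfolding M_def[symmetric] using M by (intro mult_pos_pos add_pos_pos) simp_all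
    show "- (- 1/2) * (1 / (sqrt (Q x))^5 + sqrt (Q x)) *
          (1 + 3 * (2/3 * (1 / (sqrt (Q x))^3 - (sqrt (Q x))^3)) /
           sqrt (16 + 9 * (2/3 * (1 / (sqrt (Q x))^3 - (sqrt (Q x))^3))^2)) =
          exp (- (real 5 * ln (sqrt (Q x))))"
      unfolding e unfolding M_def[symmetric] al(1) al(2) by (rule al(3))
    show "2/3 * (1 / (sqrt (Q x))^3 - (sqrt (Q x))^3) =
          (1 + 3 * (2/3 * (1 / (sqrt (Q x))^3 - (sqrt (Q x))^3)) /
           sqrt (16 + 9 * (2/3 * (1 / (sqrt (Q x))^3 - (sqrt (Q x))^3))^2)) *
          (- poly p1 x * poly q0 x * exp (- (real 5 * ln (sqrt (Q x)))))"
      unfolding e P1 Q0 unfolding M_def[symmetric] al(1) al(2) unfolding M(2)[symmetric] by (rule al(4))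
  next
    show "(\<lambda>x. 2/3 * (1 / (sqrt (Q x))^3 - (sqrt (Q x))^3)) 0 = 0" by (simp add: Q_def)
  next
    show "(\<lambda>x. - (real 5 * ln (sqrt (Q x)))) 0 = 0" by (simp add: Q_def)
  qed (use hp han in \<open>auto simp: add.commute power2_eq_square\<close>)
qed

lemma deriv_quot_sqrt:
  fixes N U Q :: "real \<Rightarrow> real"
  assumes Nd: "(N has_real_derivative N') (at x)" and Ud: "(U has_real_derivative U') (at x)"
    and Qd: "(Q has_real_derivative Q') (at x)" and Qx: "Q x > 0" and Ux: "U x \<noteq> 0"
  shows "((\<lambda>x. N x / (U x * sqrt (Q x))) has_real_derivative
           (N' * U x * Q x - N x * U' * Q x - N x * U x * Q' / 2) / ((U x)^2 * Q x * sqrt (Q x))) (at x)"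
proof -
  define S where "S = sqrt (Q x)"
  have S: "S > 0" "S^2 = Q x" using Qx by (simp_all add: S_def)
  have M: "((\<lambda>x. sqrt (Q x)) has_real_derivative Q' / (2 * S)) (at x)"
    using Qd Qx by (auto intro!: derivative_eq_intros simp: S_def field_simps)
  have D: "((\<lambda>x. U x * sqrt (Q x)) has_real_derivative U' * sqrt (Q x) + Q' / (2 * S) * U x) (at x)"
    by (rule DERIV_mult[OF Ud M])
  show ?thesis
    apply (rule DERIV_cong[OF DERIV_divide[OF Nd D]])
    using S Ux unfolding S_def[symmetric] unfolding S(2)[symmetric]
    by (simp_all add: field_simps power2_eq_square)
qed

lemma alg2a: "(T::real) \<noteq> 0 \<Longrightarrow> a \<noteq> 0 \<Longrightarrow> b \<noteq> 0 \<Longrightarrow> T / (2 * a * b) * (2 / T) = 1 / (a * b)"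
  by (simp add: field_simps)

lemma alg2b: "(T::real) \<noteq> 0 \<Longrightarrow> U \<noteq> 0 \<Longrightarrow> S \<noteq> 0 \<Longrightarrow>
   k / (U * S) = 2 / T * (- (- (U * S^2)) * (k * T / 2) * (1 / (U^2 * S^3)))"
  by (simp add: field_simps power2_eq_square power3_eq_cube)

lemma case2:
  "urabe_function
     (\<lambda>(x, y). (- y + x * y + 9 * x^2 * y + 6 * x^3 * y,
                 x + 3/2 * x^2 - 1/2 * y^2 + x^3 + 12 * x * y^2
                   + 12 * x^2 * y^2 + 1/2 * x^4))
     (\<lambda>s. - s / sqrt (4 + 49 * s^2))"
proof -
  have hh: "(\<lambda>s::real. - s / sqrt (4 + 49 * s^2)) = (\<lambda>s. (-1) * s / sqrt (49 * s^2 + 4))"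
    by (simp add: add.commute)
  note hp = h_props[of 4 "1/5" 49 "-1", simplified]
  have han: "odd_analytic_near_0 (\<lambda>s::real. - s / sqrt (4 + 49 * s^2))"
    unfolding hh by (rule odd_analytic_h) simp
  define Q where "Q = (\<lambda>x::real. 1 - 3 * x - 3 * x^2)"
  define U where "U = (\<lambda>x::real. 1 + 2 * x)"
  define K where "K = (\<lambda>x::real. x + x^2)"
  have Qd: "(Q has_real_derivative (- 3 - 6 * x)) (at x)" for x
    unfolding Q_def by (auto intro!: derivative_eq_intros)
  have Ud: "(U has_real_derivative 2) (at x)" for x
    unfolding U_def by (auto intro!: derivative_eq_intros)
  have Kd: "(K has_real_derivative 1 + 2 * x) (at x)" for x
    unfolding K_def by (auto intro!: derivative_eq_intros)
  define p1 :: "real poly" where "p1 = [:-1, 1, 9, 6:]"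
  define q0 :: "real poly" where "q0 = [:0, 1, 3/2, 1, 1/2:]"
  define q2 :: "real poly" where "q2 = [:-1/2, 12, 12:]"
  have P1: "poly p1 x = - (U x * Q x)" for x
    by (simp add: p1_def Q_def U_def field_simps power2_eq_square power3_eq_cube)
  have P1': "poly q2 x + poly (pderiv p1) x = 1/2 + 30 * x + 30 * x^2" for x
    by (simp add: p1_def q2_def pderiv_pCons field_simps power2_eq_square)
  have Q0: "poly q0 x = K x * (2 + K x) / 2" for x
    by (simp add: q0_def K_def field_simps power2_eq_square power3_eq_cube power4_eq_xxxx)
  have V: "\<And>x y. (case (x, y) of (x, y) \<Rightarrow> (- y + x * y + 9 * x^2 * y + 6 * x^3 * y,
                 x + 3/2 * x^2 - 1/2 * y^2 + x^3 + 12 * x * y^2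
                   + 12 * x^2 * y^2 + 1/2 * x^4)) =
        (poly p1 x * y, poly q0 x + poly q2 x * y^2)"
    by (simp add: p1_def q0_def q2_def field_simps power2_eq_square power3_eq_cube power4_eq_xxxx)
  show ?thesis
  proof (rule urabe_generic[where pP=p1 and qZ=q0 and qT=q2 and \<delta>="1/4" and \<epsilon>="1/5"
      and F="\<lambda>x. - (real 2 * ln (U x) + real 3 * ln (sqrt (Q x)))"
      and Xi="\<lambda>x. K x / (U x * sqrt (Q x))"
      and Xi'="\<lambda>x. (2 + K x) / (2 * (U x)^2 * (sqrt (Q x))^3)", OF V])
    show "poly q0 0 = 0" by (simp add: q0_def)
    show "(0::real) < 1/4" by simp
    show "(0::real) < 1/5" by simp
    fix x :: real assume x: "\<bar>x\<bar> < 1/4"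
    have Qx: "Q x > 0"
    proof -
      have "3 * x + 3 * x^2 \<le> 3 * \<bar>x\<bar> + 3 * \<bar>x\<bar>^2" by (simp add: abs_le_iff)
      also have "\<dots> \<le> 3 * (1/4) + 3 * (1/4)^2" using x
        by (intro add_mono mult_left_mono power_mono) auto
      also have "\<dots> = 15/16" by (simp add: power2_eq_square)
      finally show ?thesis unfolding Q_def by linarith
    qed
    have Ux: "U x > 0" using x by (simp add: U_def)
    define S where "S = sqrt (Q x)"
    have S: "S > 0" "S^2 = Q x" using Qx by (simp_all add: S_def)
    show "poly p1 x \<noteq> 0" using Qx Ux by (simp add: P1)
    have K2: "2 + K x > 0"
    proof -
      have "2 + K x = (x + 1/2)^2 + 7/4" by (simp add: K_def power2_eq_square algebra_simps)
      moreover have "0 \<le> (x + 1/2)^2" by simp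
      ultimately show ?thesis by linarith
    qed
    have lnU: "((\<lambda>x. ln (U x)) has_real_derivative inverse (U x) * 2) (at x)"
      by (rule DERIV_chain2[OF DERIV_ln[OF Ux] Ud])
    show "((\<lambda>x. - (real 2 * ln (U x) + real 3 * ln (sqrt (Q x)))) has_real_derivative
            - (poly q2 x + poly (pderiv p1) x) / poly p1 x) (at x)"
    proof (rule DERIV_cong[OF DERIV_minus[OF DERIV_add[OF DERIV_cmult[OF lnU] DERIV_cmult[OF deriv_ln_sqrt[OF Qd Qx]]]]])
      have num: "- 4 * Q x + 9/2 * (1 + 2 * x) * U x = 1/2 + 30 * x + 30 * x^2"
        by (simp add: Q_def U_def field_simps power2_eq_square)
      show "- (real 2 * (inverse (U x) * 2) + real 3 * ((- 3 - 6 * x) / (2 * Q x))) =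
            - (poly q2 x + poly (pderiv p1) x) / poly p1 x"
        unfolding P1 P1' num[symmetric] using Ux Qx by (simp add: field_simps)
    qed
    show "((\<lambda>x. K x / (U x * sqrt (Q x))) has_real_derivative (2 + K x) / (2 * (U x)^2 * (sqrt (Q x))^3)) (at x)"
    proof (rule DERIV_cong[OF deriv_quot_sqrt[OF Kd Ud Qd Qx]])
      show "U x \<noteq> 0" using Ux by simp
      have num: "(1 + 2 * x) * U x * Q x - K x * 2 * Q x - K x * U x * (- 3 - 6 * x) / 2 = (2 + K x) / 2"
        by (simp add: Q_def U_def K_def field_simps power2_eq_square power3_eq_cube)
      show "((1 + 2 * x) * U x * Q x - K x * 2 * Q x - K x * U x * (- 3 - 6 * x) / 2) / ((U x)^2 * Q x * sqrt (Q x))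
            = (2 + K x) / (2 * (U x)^2 * (sqrt (Q x))^3)"
        unfolding num unfolding S_def[symmetric] unfolding S(2)[symmetric] using S(1) Ux
        by (simp add: field_simps power2_eq_square power3_eq_cube)
    qed
    have e: "exp (- (real 2 * ln (U x) + real 3 * ln (sqrt (Q x)))) = 1 / ((U x)^2 * S^3)"
    proof -
      have "exp (- (real 2 * ln (U x) + real 3 * ln (sqrt (Q x)))) =
            exp (- (real 2 * ln (U x))) * exp (- (real 3 * ln (sqrt (Q x))))"
        by (simp only: minus_add_distrib exp_add)
      also have "\<dots> = 1 / (U x)^2 * (1 / S^3)"
        using exp_neg_nat_ln[OF Ux, of 2] exp_neg_nat_ln[of "sqrt (Q x)" 3] Qx by (simp add: S_def)
      finally show ?thesis by simp
    qed
    have sq0: "(2 + K x)^2 = 4 * (U x)^2 * S^2 + 49 * (K x)^2"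
      unfolding S(2) by (simp add: Q_def U_def K_def field_simps power2_eq_square)
    have sq: "sqrt (4 + 49 * (K x / (U x * sqrt (Q x)))^2) = (2 + K x) / (U x * S)"
    proof (rule real_sqrt_unique)
      show "((2 + K x) / (U x * S))^2 = 4 + 49 * (K x / (U x * sqrt (Q x)))^2"
        unfolding S_def[symmetric] using S(1) Ux sq0 by (simp add: power_divide field_simps)
      show "0 \<le> (2 + K x) / (U x * S)" using S(1) Ux K2 by simp
    qed
    have r: "1 + - (K x / (U x * S)) / ((2 + K x) / (U x * S)) = 2 / (2 + K x)"
      using S(1) Ux K2 by (simp add: field_simps)
    show "0 < (2 + K x) / (2 * (U x)^2 * (sqrt (Q x))^3)" using K2 Ux Qx by simp
    show "(2 + K x) / (2 * (U x)^2 * (sqrt (Q x))^3) *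
          (1 + - (K x / (U x * sqrt (Q x))) / sqrt (4 + 49 * (K x / (U x * sqrt (Q x)))^2)) =
          exp (- (real 2 * ln (U x) + real 3 * ln (sqrt (Q x))))"
      unfolding sq e unfolding S_def[symmetric] r using S(1) Ux K2 by (intro alg2a) simp_all
    show "K x / (U x * sqrt (Q x)) =
          (1 + - (K x / (U x * sqrt (Q x))) / sqrt (4 + 49 * (K x / (U x * sqrt (Q x)))^2)) *
          (- poly p1 x * poly q0 x * exp (- (real 2 * ln (U x) + real 3 * ln (sqrt (Q x)))))"
      unfolding sq e P1 Q0 unfolding S_def[symmetric] r unfolding S(2)[symmetric]
      using S(1) Ux K2 by (intro alg2b) simp_all
  next
    show "(\<lambda>x. K x / (U x * sqrt (Q x))) 0 = 0" by (simp add: K_def)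
  next
    show "(\<lambda>x. - (real 2 * ln (U x) + real 3 * ln (sqrt (Q x)))) 0 = 0" by (simp add: Q_def U_def)
  qed (use hp han in \<open>auto simp: add.commute power2_eq_square\<close>)
qed

theorem mainTheorem2:
  shows "urabe_function
           (\<lambda>(x, y). (- y + x * y - 1/2 * x^2 * y + 1/8 * x^3 * y,
                       x - 3/4 * x^2 + 1/4 * y^2 + 5/24 * x^3 + 3/8 * x * y^2
                         - 1/16 * x^2 * y^2 - 1/48 * x^4))
           (\<lambda>s. 3 * s / sqrt (16 + 9 * s^2)) \<and>
         urabe_function
           (\<lambda>(x, y). (- y + x * y + 9 * x^2 * y + 6 * x^3 * y,
                       x + 3/2 * x^2 - 1/2 * y^2 + x^3 + 12 * x * y^2
                         + 12 * x^2 * y^2 + 1/2 * x^4))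
           (\<lambda>s. - s / sqrt (4 + 49 * s^2)) \<and>
         (\<forall>a31 :: real. urabe_function
           (\<lambda>(x, y). (- y + x * y - (3 * a31 + 2/9) * x^2 * y + a31 * x^3 * y,
                       x + (1/9 - 3 * a31) * x * y^2))
           (\<lambda>s. s / sqrt ((1 - 27 * a31) * s^2 + 9))) \<and>
         urabe_function
           (\<lambda>(x, y). (- y + x * y,
                       x - 3/2 * x^2 + y^2 + x^3 - 1/4 * x^4))
           (\<lambda>s. s / sqrt (1 + s^2))"
    by (intro conjI allI case1 case2 case3 case4)

end
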